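(* Let $\mathbf C$ and $\mathbf D$ be minimal clone $\tau$-algebras and let $\mathbf E=\mathbf C\times\mathbf D$ be their direct product as clone $\tau$-algebras. The following are equivalent: (1) $\mathbf E$ is minimal; (2) the varieties $\mathrm{Var}(\mathbf C_\tau)$ and $\mathrm{Var}(\mathbf D_\tau)$ are independent; (3) $\mathrm{Clo}\,\mathbf E_\tau=R_{\mathbf E}$. If these conditions hold, then $\mathrm{Var}(\mathbf E_\tau)=\mathrm{Var}(\mathbf C_\tau)\times\mathrm{Var}(\mathbf D_\tau)=\mathrm{Var}(\mathbf C_\tau)\vee\mathrm{Var}(\mathbf D_\tau)$, where the join is taken in the lattice of subvarieties of $\mathrm{Var}(\mathbf E_\tau)$.
   Context: A clone $\tau$-algebra is an algebra $\mathbf C=(C,\sigma^{\mathbf C}\ (\sigma\in\tau),q_n^{\mathbf C}\ (n\ge0),\mathsf e_i^{\mathbf C}\ (i\ge1))$ with $\mathsf e_i$ nullary, $q_n$ of arity $n+1$, satisfying: (C1) $q_n(\mathsf e_i,x_1,\dots,x_n)=x_i$ ($1\le i\le n$); (C2) $q_n(\mathsf e_j,x_1,\dots,x_n)=\mathsf e_j$ ($j>n$); (C3) $q_n(x,\mathsf e_1,\dots,\mathsf e_n)=x$; (C4) $q_k(x,y_1,\dots,y_k)=q_n(x,y_1,\dots,y_k,\mathsf e_{k+1},\dots,\mathsf e_n)$ ($n>k$); (C5) $q_n(q_n(x,\mathbf y),\mathbf z)=q_n(x,q_n(y_1,\mathbf z),\dots,q_n(y_n,\mathbf z))$; (C6)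 $q_n(\sigma(x_1,\dots,x_k),\mathbf y)=\sigma(q_n(x_1,\mathbf y),\dots,q_n(x_k,\mathbf y))$ for $\sigma\in\tau$ of arity $k$. $\mathbf C_\tau=(C,\sigma^{\mathbf C})_{\sigma\in\tau}$ is its $\tau$-reduct. $\mathbf C$ is minimal if $C$ is the smallest subset containing all $\mathsf e_i^{\mathbf C}$ and closed under all $\sigma^{\mathbf C}$. An element $a$ is independent of $\mathsf e_n$ if $q_n(a,\mathsf e_1,\dots,\mathsf e_{n-1},\mathsf e_{n+1})=a$; its dimension is the largest $n$ it depends on ($0$ if none). A function $f:E^k\to E$ is $\mathbf E$-representable if $f(\mathsf e_1,\dots,\mathsf e_k)$ has dimension $\le k$ and $f(a_1,\dots,a_k)=q_k(f(\mathsf e_1,\dots,\mathsf e_k),a_1,\dots,a_k)$ for all $a_i$; $R_{\mathbf E}$ is the set of these. $\mathrm{Clo}\,\mathbf E_\tau$ is the clone of term operations of $\mathbf E_\tau$ (smallest set of finitary operations, nullary included, containing projections and the basic operations, closed under composition and under restriction, i.e. dropping a last argument on which the operation does not depend). Subvarieties $\mathcal V_1,\mathcal V_2$ of type $\tau$ are independent if there is a $\tau$-term $t(v_1,v_2)$ with $\mathcal V_1\models t(v_1,v_2)=v_1$ and $\mathcal V_2\models t(v_1,v_2)=v_2$. The product of varieties is $\mathcal V_1\times\mathcal V_2=\{\mathbf A: \mathbf A\cong\mathbf A_1\times\mathbf A_2,\ \mathbf A_i\in\mathcal V_i\}$. *)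

theory Defs
  imports Main
begin

text \<open>A type tau is given by a type 'f of operation symbols with an arity function
  ar :: 'f => nat.  A tau-algebra on a carrier A :: 'a set is given by
  ops :: 'f => 'a list => 'a (ops s applied to lists of length ar s).\<close>

datatype 'f trm = Var nat | App 'f "'f trm list"

fun wf_trm :: "('f \<Rightarrow> nat) \<Rightarrow> 'f trm \<Rightarrow> bool" where
  "wf_trm ar (Var i) = True"
| "wf_trm ar (App s ts) = (length ts = ar s \<and> (\<forall>t\<in>set ts. wf_trm ar t))"

fun vars_trm :: "'f trm \<Rightarrow> nat set" where
  "vars_trm (Var i) = {i}"
| "vars_trm (App s ts) = (\<Union>t\<in>set ts. vars_trm t)"

fun eval_trm :: "('f \<Rightarrow> 'a list \<Rightarrow> 'a) \<Rightarrow> (nat \<Rightarrow> 'a) \<Rightarrow> 'f trm \<Rightarrow> 'a" where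
  "eval_trm ops \<rho> (Var i) = \<rho> i"
| "eval_trm ops \<rho> (App s ts) = ops s (map (eval_trm ops \<rho>) ts)"

definition is_alg :: "('f \<Rightarrow> nat) \<Rightarrow> 'a set \<Rightarrow> ('f \<Rightarrow> 'a list \<Rightarrow> 'a) \<Rightarrow> bool" where
  "is_alg ar A ops \<longleftrightarrow>
     (\<forall>s xs. xs \<in> lists A \<longrightarrow> length xs = ar s \<longrightarrow> ops s xs \<in> A)"

text \<open>Identities are pairs of well-formed terms (variables indexed by nat, 0-based).\<close>

definition sat_id :: "'a set \<Rightarrow> ('f \<Rightarrow> 'a list \<Rightarrow> 'a) \<Rightarrow> 'f trm \<times> 'f trm \<Rightarrow> bool" where
  "sat_id A ops st \<longleftrightarrow>
     (\<forall>\<rho>. (\<forall>i. \<rho> i \<in> A) \<longrightarrow> eval_trm ops \<rho> (fst st) = eval_trm ops \<rho> (snd st))"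

definition Id_of :: "('f \<Rightarrow> nat) \<Rightarrow> 'a set \<Rightarrow> ('f \<Rightarrow> 'a list \<Rightarrow> 'a) \<Rightarrow> ('f trm \<times> 'f trm) set" where
  "Id_of ar A ops = {(s, t). wf_trm ar s \<and> wf_trm ar t \<and> sat_id A ops (s, t)}"

text \<open>The variety Var(A) generated by A is (Birkhoff) Mod(Id(A)); it is a class
  ranging over all types, represented here at an arbitrary type 'b.\<close>

definition Mod :: "('f \<Rightarrow> nat) \<Rightarrow> ('f trm \<times> 'f trm) set \<Rightarrow> ('b set \<times> ('f \<Rightarrow> 'b list \<Rightarrow> 'b)) set" where
  "Mod ar I = {(B, opsB). B \<noteq> {} \<and> is_alg ar B opsB \<and> (\<forall>st\<in>I. sat_id B opsB st)}"

abbreviation Var_of :: "('f \<Rightarrow> nat) \<Rightarrow> 'a set \<Rightarrow> ('f \<Rightarrow> 'a list \<Rightarrow> 'a) \<Rightarrow> ('b set \<times> ('f \<Rightarrow> 'b list \<Rightarrow> 'b)) set" where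
  "Var_of ar A ops \<equiv> Mod ar (Id_of ar A ops)"

text \<open>A variety satisfies an identity iff the identity belongs to the equational theory;
  for Var(A) this theory is Id(A).\<close>

definition indep_varieties :: "('f \<Rightarrow> nat) \<Rightarrow> ('f trm \<times> 'f trm) set \<Rightarrow> ('f trm \<times> 'f trm) set \<Rightarrow> bool" where
  "indep_varieties ar I1 I2 \<longleftrightarrow>
     (\<exists>t. wf_trm ar t \<and> vars_trm t \<subseteq> {0, 1} \<and> (t, Var 0) \<in> I1 \<and> (t, Var 1) \<in> I2)"

definition prod_ops :: "('f \<Rightarrow> 'a list \<Rightarrow> 'a) \<Rightarrow> ('f \<Rightarrow> 'b list \<Rightarrow> 'b) \<Rightarrow> 'f \<Rightarrow> ('a \<times> 'b) list \<Rightarrow> 'a \<times> 'b" where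
  "prod_ops opsA opsB s xs = (opsA s (map fst xs), opsB s (map snd xs))"

definition alg_iso :: "('f \<Rightarrow> nat) \<Rightarrow> 'a set \<Rightarrow> ('f \<Rightarrow> 'a list \<Rightarrow> 'a) \<Rightarrow> 'b set \<Rightarrow> ('f \<Rightarrow> 'b list \<Rightarrow> 'b) \<Rightarrow> bool" where
  "alg_iso ar A opsA B opsB \<longleftrightarrow>
     (\<exists>h. bij_betw h A B \<and>
        (\<forall>s xs. xs \<in> lists A \<longrightarrow> length xs = ar s \<longrightarrow> h (opsA s xs) = opsB s (map h xs)))"

text \<open>V1 x V2 = {A. A isomorphic to A1 x A2 with Ai in Vi}, at type 'b.  Since members
  are nonempty, the factors have cardinality at most that of A and may be taken in 'b.\<close>

definition prod_variety :: "('f \<Rightarrow> nat) \<Rightarrow> ('b set \<times> ('f \<Rightarrow> 'b list \<Rightarrow> 'b)) set \<Rightarrow> ('b set \<times> ('f \<Rightarrow> 'b list \<Rightarrow> 'b)) set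
    \<Rightarrow> ('b set \<times> ('f \<Rightarrow> 'b list \<Rightarrow> 'b)) set" where
  "prod_variety ar V1 V2 = {(A, opsA). is_alg ar A opsA \<and> A \<noteq> {} \<and>
     (\<exists>A1 ops1 A2 ops2. (A1, ops1) \<in> V1 \<and> (A2, ops2) \<in> V2 \<and>
        alg_iso ar A opsA (A1 \<times> A2) (prod_ops ops1 ops2))}"

text \<open>Join of Var(A) and Var(B) in the lattice of varieties: the smallest variety containing
  both, i.e. the models of the identities common to both.\<close>

definition join_variety :: "('f \<Rightarrow> nat) \<Rightarrow> ('f trm \<times> 'f trm) set \<Rightarrow> ('f trm \<times> 'f trm) set
    \<Rightarrow> ('b set \<times> ('f \<Rightarrow> 'b list \<Rightarrow> 'b)) set" where
  "join_variety ar I1 I2 = Mod ar (I1 \<inter> I2)"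

text \<open>q n x ys is q_n(x, y_1, ..., y_n) with ys = [y_1,...,y_n]; e i is e_i (i >= 1; e 0 is
  unused).\<close>

abbreviation evec :: "(nat \<Rightarrow> 'a) \<Rightarrow> nat \<Rightarrow> 'a list" where
  "evec e n \<equiv> map e [1..<Suc n]"

definition clone_alg :: "('f \<Rightarrow> nat) \<Rightarrow> 'a set \<Rightarrow> ('f \<Rightarrow> 'a list \<Rightarrow> 'a)
    \<Rightarrow> (nat \<Rightarrow> 'a \<Rightarrow> 'a list \<Rightarrow> 'a) \<Rightarrow> (nat \<Rightarrow> 'a) \<Rightarrow> bool" where
  "clone_alg ar C ops q e \<longleftrightarrow>
     is_alg ar C ops \<and>
     (\<forall>i\<ge>1. e i \<in> C) \<and>
     (\<forall>n x ys. x \<in> C \<longrightarrow> ys \<in> lists C \<longrightarrow> length ys = n \<longrightarrow> q n x ys \<in> C) \<and>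
     \<comment> \<open>C1\<close>
     (\<forall>n i xs. 1 \<le> i \<longrightarrow> i \<le> n \<longrightarrow> xs \<in> lists C \<longrightarrow> length xs = n \<longrightarrow> q n (e i) xs = xs ! (i - 1)) \<and>
     \<comment> \<open>C2\<close>
     (\<forall>n j xs. n < j \<longrightarrow> xs \<in> lists C \<longrightarrow> length xs = n \<longrightarrow> q n (e j) xs = e j) \<and>
     \<comment> \<open>C3\<close>
     (\<forall>n x. x \<in> C \<longrightarrow> q n x (evec e n) = x) \<and>
     \<comment> \<open>C4\<close>
     (\<forall>n k x ys. k < n \<longrightarrow> x \<in> C \<longrightarrow> ys \<in> lists C \<longrightarrow> length ys = k \<longrightarrow>
        q k x ys = q n x (ys @ map e [Suc k..<Suc n])) \<and>
     \<comment> \<open>C5\<close>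
     (\<forall>n x ys zs. x \<in> C \<longrightarrow> ys \<in> lists C \<longrightarrow> zs \<in> lists C \<longrightarrow> length ys = n \<longrightarrow> length zs = n \<longrightarrow>
        q n (q n x ys) zs = q n x (map (\<lambda>y. q n y zs) ys)) \<and>
     \<comment> \<open>C6\<close>
     (\<forall>s n xs ys. xs \<in> lists C \<longrightarrow> length xs = ar s \<longrightarrow> ys \<in> lists C \<longrightarrow> length ys = n \<longrightarrow>
        q n (ops s xs) ys = ops s (map (\<lambda>x. q n x ys) xs))"

inductive_set gen_e :: "('f \<Rightarrow> nat) \<Rightarrow> ('f \<Rightarrow> 'a list \<Rightarrow> 'a) \<Rightarrow> (nat \<Rightarrow> 'a) \<Rightarrow> 'a set"
  for ar ops e where
  gen_e_base: "1 \<le> i \<Longrightarrow> e i \<in> gen_e ar ops e"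
| gen_e_op: "xs \<in> lists (gen_e ar ops e) \<Longrightarrow> length xs = ar s \<Longrightarrow> ops s xs \<in> gen_e ar ops e"

definition minimal_clone :: "('f \<Rightarrow> nat) \<Rightarrow> 'a set \<Rightarrow> ('f \<Rightarrow> 'a list \<Rightarrow> 'a) \<Rightarrow> (nat \<Rightarrow> 'a) \<Rightarrow> bool" where
  "minimal_clone ar C ops e \<longleftrightarrow> C = gen_e ar ops e"

definition prod_q :: "(nat \<Rightarrow> 'a \<Rightarrow> 'a list \<Rightarrow> 'a) \<Rightarrow> (nat \<Rightarrow> 'b \<Rightarrow> 'b list \<Rightarrow> 'b)
    \<Rightarrow> nat \<Rightarrow> 'a \<times> 'b \<Rightarrow> ('a \<times> 'b) list \<Rightarrow> 'a \<times> 'b" where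
  "prod_q qA qB n x ys = (qA n (fst x) (map fst ys), qB n (snd x) (map snd ys))"

definition prod_e :: "(nat \<Rightarrow> 'a) \<Rightarrow> (nat \<Rightarrow> 'b) \<Rightarrow> nat \<Rightarrow> 'a \<times> 'b" where
  "prod_e eA eB i = (eA i, eB i)"

definition indep_of :: "(nat \<Rightarrow> 'a \<Rightarrow> 'a list \<Rightarrow> 'a) \<Rightarrow> (nat \<Rightarrow> 'a) \<Rightarrow> 'a \<Rightarrow> nat \<Rightarrow> bool" where
  "indep_of q e a n \<longleftrightarrow> q n a (map e [1..<n] @ [e (Suc n)]) = a"

definition dim_le :: "(nat \<Rightarrow> 'a \<Rightarrow> 'a list \<Rightarrow> 'a) \<Rightarrow> (nat \<Rightarrow> 'a) \<Rightarrow> 'a \<Rightarrow> nat \<Rightarrow> bool" where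
  "dim_le q e a k \<longleftrightarrow> (\<forall>n>k. indep_of q e a n)"

text \<open>Finitary operations on E are pairs (k, f) with f :: 'a list => 'a, only the values of
  f on E^k (lists over E of length k) being relevant.\<close>

definition repr_ops :: "'a set \<Rightarrow> (nat \<Rightarrow> 'a \<Rightarrow> 'a list \<Rightarrow> 'a) \<Rightarrow> (nat \<Rightarrow> 'a) \<Rightarrow> (nat \<times> ('a list \<Rightarrow> 'a)) set" where
  "repr_ops E q e = {(k, f).
      (\<forall>xs. xs \<in> lists E \<longrightarrow> length xs = k \<longrightarrow> f xs \<in> E) \<and>
      dim_le q e (f (evec e k)) k \<and>
      (\<forall>as. as \<in> lists E \<longrightarrow> length as = k \<longrightarrow> f as = q k (f (evec e k)) as)}"

text \<open>Clone of term operations of (E, ops): smallest set of finitary operations containing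
  projections and basic operations, closed under composition and restriction (dropping a
  last argument the operation does not depend on); operations are identified when they
  agree on E^k (rule clo_ext).\<close>

inductive_set Clo :: "('f \<Rightarrow> nat) \<Rightarrow> 'a set \<Rightarrow> ('f \<Rightarrow> 'a list \<Rightarrow> 'a) \<Rightarrow> (nat \<times> ('a list \<Rightarrow> 'a)) set"
  for ar E ops where
  clo_proj: "i < k \<Longrightarrow> (k, \<lambda>xs. xs ! i) \<in> Clo ar E ops"
| clo_basic: "(ar s, ops s) \<in> Clo ar E ops"
| clo_comp: "(n, f) \<in> Clo ar E ops \<Longrightarrow> (\<forall>i<n. (k, gs i) \<in> Clo ar E ops) \<Longrightarrow>
     (k, \<lambda>xs. f (map (\<lambda>i. gs i xs) [0..<n])) \<in> Clo ar E ops"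
| clo_restr: "(Suc k, f) \<in> Clo ar E ops \<Longrightarrow>
     (\<forall>xs y. xs \<in> lists E \<longrightarrow> length xs = k \<longrightarrow> y \<in> E \<longrightarrow> g xs = f (xs @ [y])) \<Longrightarrow>
     (k, g) \<in> Clo ar E ops"
| clo_ext: "(k, f) \<in> Clo ar E ops \<Longrightarrow>
     (\<forall>xs. xs \<in> lists E \<longrightarrow> length xs = k \<longrightarrow> g xs = f xs) \<Longrightarrow> (k, g) \<in> Clo ar E ops"

end

theory Submission
  imports Defs
begin


fun subst :: "(nat \<Rightarrow> 'f trm) \<Rightarrow> 'f trm \<Rightarrow> 'f trm" where
  "subst \<sigma> (Var i) = \<sigma> i"
| "subst \<sigma> (App s ts) = App s (map (subst \<sigma>) ts)"

lemma eval_subst: "eval_trm ops \<rho> (subst \<sigma> t) = eval_trm ops (\<lambda>i. eval_trm ops \<rho> (\<sigma> i)) t"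
  by (induction t) (auto simp: o_def cong: map_cong)

lemma wf_subst: "wf_trm ar t \<Longrightarrow> (\<forall>i. wf_trm ar (\<sigma> i)) \<Longrightarrow> wf_trm ar (subst \<sigma> t)"
  by (induction t) auto

lemma vars_subst: "vars_trm (subst \<sigma> t) = (\<Union>i\<in>vars_trm t. vars_trm (\<sigma> i))"
  by (induction t) auto

lemma finite_vars: "finite (vars_trm t)"
  by (induction t) auto

lemma eval_closed: "is_alg ar A ops \<Longrightarrow> wf_trm ar t \<Longrightarrow> (\<forall>i\<in>vars_trm t. \<rho> i \<in> A) \<Longrightarrow> eval_trm ops \<rho> t \<in> A"
proof (induction t)
  case (Var x) then show ?case by simp
next
  case (App s ts) then show ?case unfolding is_alg_def by (auto simp: in_lists_conv_set)
qed

lemma eval_cong: "(\<forall>i\<in>vars_trm t. \<rho> i = \<rho>' i) \<Longrightarrow> eval_trm ops \<rho> t = eval_trm ops \<rho>' t"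
  by (induction t) (auto cong: map_cong)

lemma eval_prod: "eval_trm (prod_ops o1 o2) \<rho> t = (eval_trm o1 (fst \<circ> \<rho>) t, eval_trm o2 (snd \<circ> \<rho>) t)"
  by (induction t) (auto simp: prod_ops_def o_def cong: map_cong)


context
  fixes ar :: "'f \<Rightarrow> nat" and E :: "'a set" and ops and q and e
  assumes CA: "clone_alg ar E ops q e"
begin

lemma CAx: "is_alg ar E ops \<and>
     (\<forall>i\<ge>1. e i \<in> E) \<and>
     (\<forall>n x ys. x \<in> E \<longrightarrow> ys \<in> lists E \<longrightarrow> length ys = n \<longrightarrow> q n x ys \<in> E) \<and>
     (\<forall>n i xs. 1 \<le> i \<longrightarrow> i \<le> n \<longrightarrow> xs \<in> lists E \<longrightarrow> length xs = n \<longrightarrow> q n (e i) xs = xs ! (i - 1)) \<and>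
     (\<forall>n j xs. n < j \<longrightarrow> xs \<in> lists E \<longrightarrow> length xs = n \<longrightarrow> q n (e j) xs = e j) \<and>
     (\<forall>n x. x \<in> E \<longrightarrow> q n x (evec e n) = x) \<and>
     (\<forall>n k x ys. k < n \<longrightarrow> x \<in> E \<longrightarrow> ys \<in> lists E \<longrightarrow> length ys = k \<longrightarrow>
        q k x ys = q n x (ys @ map e [Suc k..<Suc n])) \<and>
     (\<forall>n x ys zs. x \<in> E \<longrightarrow> ys \<in> lists E \<longrightarrow> zs \<in> lists E \<longrightarrow> length ys = n \<longrightarrow> length zs = n \<longrightarrow>
        q n (q n x ys) zs = q n x (map (\<lambda>y. q n y zs) ys)) \<and>
     (\<forall>s n xs ys. xs \<in> lists E \<longrightarrow> length xs = ar s \<longrightarrow> ys \<in> lists E \<longrightarrow> length ys = n \<longrightarrow>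
        q n (ops s xs) ys = ops s (map (\<lambda>x. q n x ys) xs))"
  using CA unfolding clone_alg_def .

lemma CA_alg: "is_alg ar E ops" using CA unfolding clone_alg_def by (rule conjunct1)
lemma CA_e: "1 \<le> i \<Longrightarrow> e i \<in> E" using CAx[THEN conjunct2, THEN conjunct1] by blast
lemma CA_q: "x \<in> E \<Longrightarrow> ys \<in> lists E \<Longrightarrow> length ys = n \<Longrightarrow> q n x ys \<in> E"
  using CAx[THEN conjunct2, THEN conjunct2, THEN conjunct1] by blast
lemma CA_ops: "xs \<in> lists E \<Longrightarrow> length xs = ar s \<Longrightarrow> ops s xs \<in> E"
  using CA_alg unfolding is_alg_def by blast
lemma C1: "1 \<le> i \<Longrightarrow> i \<le> n \<Longrightarrow> xs \<in> lists E \<Longrightarrow> length xs = n \<Longrightarrow> q n (e i) xs = xs ! (i - 1)"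
  using CAx[THEN conjunct2, THEN conjunct2, THEN conjunct2, THEN conjunct1] by blast
lemma C2: "n < j \<Longrightarrow> xs \<in> lists E \<Longrightarrow> length xs = n \<Longrightarrow> q n (e j) xs = e j"
  using CAx[THEN conjunct2, THEN conjunct2, THEN conjunct2, THEN conjunct2, THEN conjunct1] by blast
lemma C3: "x \<in> E \<Longrightarrow> q n x (evec e n) = x"
  using CAx[THEN conjunct2, THEN conjunct2, THEN conjunct2, THEN conjunct2, THEN conjunct2, THEN conjunct1] by blast
lemma C4: "k < n \<Longrightarrow> x \<in> E \<Longrightarrow> ys \<in> lists E \<Longrightarrow> length ys = k \<Longrightarrow>
        q k x ys = q n x (ys @ map e [Suc k..<Suc n])"
  using CAx[THEN conjunct2, THEN conjunct2, THEN conjunct2, THEN conjunct2, THEN conjunct2, THEN conjunct2, THEN conjunct1] by blast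
lemma C5: "x \<in> E \<Longrightarrow> ys \<in> lists E \<Longrightarrow> zs \<in> lists E \<Longrightarrow> length ys = n \<Longrightarrow> length zs = n \<Longrightarrow>
        q n (q n x ys) zs = q n x (map (\<lambda>y. q n y zs) ys)"
  using CAx[THEN conjunct2, THEN conjunct2, THEN conjunct2, THEN conjunct2, THEN conjunct2, THEN conjunct2, THEN conjunct2, THEN conjunct1] by blast
lemma C6: "xs \<in> lists E \<Longrightarrow> length xs = ar s \<Longrightarrow> ys \<in> lists E \<Longrightarrow> length ys = n \<Longrightarrow>
        q n (ops s xs) ys = ops s (map (\<lambda>x. q n x ys) xs)"
  using CAx[THEN conjunct2, THEN conjunct2, THEN conjunct2, THEN conjunct2, THEN conjunct2, THEN conjunct2, THEN conjunct2, THEN conjunct2] by blast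

lemma evec_lists: "map e [Suc a..<b] \<in> lists E"
  using CA_e by auto

lemma q_evec: "ys \<in> lists E \<Longrightarrow> length ys = n \<Longrightarrow> k \<le> n \<Longrightarrow>
   map (\<lambda>y. q n y ys) (evec e k) = take k ys"
proof (rule nth_equalityI)
  assume a: "ys \<in> lists E" "length ys = n" "k \<le> n"
  fix i assume "i < length (map (\<lambda>y. q n y ys) (evec e k))"
  then have i: "i < k" by (simp del: upt_Suc)
  then have "evec e k ! i = e (Suc i)" by (simp del: upt_Suc)
  with i show "map (\<lambda>y. q n y ys) (evec e k) ! i = take k ys ! i"
    using C1[of "Suc i" n ys] a by (simp del: upt_Suc)
next
  assume a: "ys \<in> lists E" "length ys = n" "k \<le> n"
  then show "length (map (\<lambda>y. q n y ys) (evec e k)) = length (take k ys)" by simp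
qed

lemma indep_step:
  assumes ind: "indep_of q e a (Suc k)" and a: "a \<in> E" and xs: "xs \<in> lists E" "length xs = k"
    and b: "b \<in> E"
  shows "q (Suc k) a (xs @ [b]) = q k a xs"
proof -
  have R: "q (Suc k) a (xs @ [y]) = q (Suc k) a (xs @ [e (Suc (Suc k))])" if y: "y \<in> E" for y
  proof -
    have "q (Suc k) a (xs @ [y]) = q (Suc k) (q (Suc k) a (evec e k @ [e (Suc (Suc k))])) (xs @ [y])"
      using ind unfolding indep_of_def by simp
    also have "\<dots> = q (Suc k) a (map (\<lambda>z. q (Suc k) z (xs @ [y])) (evec e k @ [e (Suc (Suc k))]))"
      by (rule C5) (use a xs y CA_e in auto)
    also have "map (\<lambda>z. q (Suc k) z (xs @ [y])) (evec e k @ [e (Suc (Suc k))]) = xs @ [e (Suc (Suc k))]"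
    proof -
      have "map (\<lambda>z. q (Suc k) z (xs @ [y])) (evec e k) = take k (xs @ [y])"
        by (rule q_evec) (use xs y in auto)
      moreover have "q (Suc k) (e (Suc (Suc k))) (xs @ [y]) = e (Suc (Suc k))"
        by (rule C2) (use xs y in auto)
      ultimately show ?thesis using xs by simp
    qed
    finally show ?thesis .
  qed
  have "q k a xs = q (Suc k) a (xs @ map e [Suc k..<Suc (Suc k)])"
    by (rule C4) (use a xs in auto)
  also have "\<dots> = q (Suc k) a (xs @ [e (Suc k)])" by simp
  also have "\<dots> = q (Suc k) a (xs @ [b])" using R[of "e (Suc k)"] R[OF b] CA_e by simp
  finally show ?thesis by simp
qed

lemma dim_drop:
  assumes d: "dim_le q e a n" and a: "a \<in> E" and xs: "xs \<in> lists E" "length xs = n"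
  shows "ys \<in> lists E \<Longrightarrow> q (n + length ys) a (xs @ ys) = q n a xs"
proof (induction ys rule: rev_induct)
  case Nil then show ?case by simp
next
  case (snoc b ys)
  have "q (n + length (ys @ [b])) a (xs @ ys @ [b]) = q (Suc (n + length ys)) a ((xs @ ys) @ [b])" by simp
  also have "\<dots> = q (n + length ys) a (xs @ ys)"
    by (rule indep_step) (use d snoc.prems a xs in \<open>auto simp: dim_le_def\<close>)
  also have "\<dots> = q n a xs" using snoc by auto
  finally show ?case by simp
qed

lemma mixed_C5:
  assumes F: "F \<in> E" "dim_le q e F n" and Gs: "Gs \<in> lists E" "length Gs = n"
    and zs: "zs \<in> lists E" "length zs = k"
  shows "q k (q n F Gs) zs = q n F (map (\<lambda>G. q k G zs) Gs)"
proof (cases "k \<le> n")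
  case True
  define zs' where "zs' = zs @ map e [Suc k..<Suc n]"
  have zs': "zs' \<in> lists E" "length zs' = n" using zs True CA_e by (auto simp: zs'_def)
  have eq: "q k w zs = q n w zs'" if "w \<in> E" for w
  proof (cases "k = n")
    case True then show ?thesis using zs by (simp add: zs'_def)
  next
    case False then show ?thesis using C4[of k n w zs] that zs \<open>k \<le> n\<close> by (simp add: zs'_def)
  qed
  have "q k (q n F Gs) zs = q n (q n F Gs) zs'" using eq CA_q F Gs by simp
  also have "\<dots> = q n F (map (\<lambda>y. q n y zs') Gs)" using C5 F Gs zs' by simp
  also have "map (\<lambda>y. q n y zs') Gs = map (\<lambda>G. q k G zs) Gs" using eq Gs by auto
  finally show ?thesis .
next
  case False
  define Gs' where "Gs' = Gs @ map e [Suc n..<Suc k]"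
  have Gs': "Gs' \<in> lists E" "length Gs' = k" using Gs False CA_e by (auto simp: Gs'_def)
  have "q n F Gs = q k F Gs'" using C4[of n k F Gs] False F Gs by (simp add: Gs'_def)
  hence "q k (q n F Gs) zs = q k F (map (\<lambda>y. q k y zs) Gs')" using C5 F Gs' zs by simp
  also have "map (\<lambda>y. q k y zs) Gs' = map (\<lambda>G. q k G zs) Gs @ drop n zs"
  proof -
    have "map (\<lambda>y. q k y zs) (map e [Suc n..<Suc k]) = drop n zs"
    proof (rule nth_equalityI)
      show "length (map (\<lambda>y. q k y zs) (map e [Suc n..<Suc k])) = length (drop n zs)"
        using zs by (simp del: upt_Suc)
      fix i assume "i < length (map (\<lambda>y. q k y zs) (map e [Suc n..<Suc k]))"
      then have i: "i < k - n" by (simp del: upt_Suc)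
      then have "map e [Suc n..<Suc k] ! i = e (Suc n + i)" by (simp del: upt_Suc)
      then show "map (\<lambda>y. q k y zs) (map e [Suc n..<Suc k]) ! i = drop n zs ! i"
        using C1[of "Suc n + i" k zs] i zs by (simp del: upt_Suc)
    qed
    then show ?thesis by (simp add: Gs'_def)
  qed
  also have "q k F (map (\<lambda>G. q k G zs) Gs @ drop n zs) = q n F (map (\<lambda>G. q k G zs) Gs)"
  proof -
    have l1: "map (\<lambda>G. q k G zs) Gs \<in> lists E" using Gs zs CA_q by (auto simp: in_lists_conv_set)
    have l2: "drop n zs \<in> lists E" using zs by (auto dest: in_set_dropD)
    have "n + length (drop n zs) = k" using zs False by simp
    then show ?thesis using dim_drop[OF F(2) F(1) l1 _ l2] Gs by simp
  qed
  finally show ?thesis .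
qed

end


declare upt_Suc[simp del]

lemma reprD: assumes "(k, f) \<in> repr_ops E q e"
  shows "\<And>xs. xs \<in> lists E \<Longrightarrow> length xs = k \<Longrightarrow> f xs \<in> E" "dim_le q e (f (evec e k)) k"
    "\<And>as. as \<in> lists E \<Longrightarrow> length as = k \<Longrightarrow> f as = q k (f (evec e k)) as"
  using assms unfolding repr_ops_def mem_Collect_eq case_prod_conv by blast+

context
  fixes ar :: "'f \<Rightarrow> nat" and E :: "'a set" and ops and q and e
  assumes CA: "clone_alg ar E ops q e"
begin

lemma indL: "map e [1..<n] @ [e (Suc n)] \<in> lists E" "0 < n \<Longrightarrow> length (map e [1..<n] @ [e (Suc n)]) = n"
  "k < n \<Longrightarrow> take k (map e [1..<n] @ [e (Suc n)]) = evec e k"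
proof -
  show "map e [1..<n] @ [e (Suc n)] \<in> lists E" using CA_e[OF CA] by auto
  show "0 < n \<Longrightarrow> length (map e [1..<n] @ [e (Suc n)]) = n" by simp
  assume "k < n"
  then show "take k (map e [1..<n] @ [e (Suc n)]) = evec e k"
    by (simp add: take_map)
qed

lemma evecE: "evec e k \<in> lists E" using CA_e[OF CA] by auto

lemma dim_e: "1 \<le> i \<Longrightarrow> i \<le> k \<Longrightarrow> dim_le q e (e i) k"
  unfolding dim_le_def indep_of_def
proof (intro allI impI)
  fix n assume i: "1 \<le> i" "i \<le> k" and n: "k < n"
  have "q n (e i) (map e [1..<n] @ [e (Suc n)]) = (map e [1..<n] @ [e (Suc n)]) ! (i - 1)"
    using C1[OF CA, of i n] i n indL by force
  also have "\<dots> = e i"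
  proof -
    have "i - 1 < n - 1" using i n by arith
    then show ?thesis using i by (simp add: nth_append)
  qed
  finally show "q n (e i) (map e [1..<n] @ [e (Suc n)]) = e i" .
qed

lemma dim_mono: "dim_le q' e' a k \<Longrightarrow> k \<le> m \<Longrightarrow> dim_le q' e' a m"
  unfolding dim_le_def by auto

lemma Clo_repr: "(k, f) \<in> Clo ar E ops \<Longrightarrow> (k, f) \<in> repr_ops E q e"
proof (induction rule: Clo.induct)
  case (clo_proj i k)
  have ev: "evec e k ! i = e (Suc i)" using clo_proj by (simp del: upt_Suc)
  show ?case
  proof (unfold repr_ops_def, intro CollectI case_prodI conjI allI impI)
    show "xs ! i \<in> E" if "xs \<in> lists E" "length xs = k" for xs
      using that clo_proj by auto
    show "dim_le q e (evec e k ! i) k" unfolding ev by (rule dim_e) (use clo_proj in auto)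
    show "as ! i = q k (evec e k ! i) as" if "as \<in> lists E" "length as = k" for as
      unfolding ev using C1[OF CA, of "Suc i" k as] that clo_proj by simp
  qed
next
  case (clo_basic s)
  define F where "F = ops s (evec e (ar s))"
  have FE: "F \<in> E" unfolding F_def using CA_ops[OF CA] evecE by auto
  have rep: "q (ar s) F as = ops s as" if "as \<in> lists E" "length as = ar s" for as
    unfolding F_def using C6[OF CA, of "evec e (ar s)" s as "ar s"] q_evec[OF CA, of as "ar s" "ar s"] evecE that
    by (simp del: upt_Suc)
  show ?case
  proof (unfold repr_ops_def, intro CollectI case_prodI conjI allI impI)
    show "ops s xs \<in> E" if "xs \<in> lists E" "length xs = ar s" for xs
      using that CA_ops[OF CA] by auto
    show "ops s as = q (ar s) (ops s (evec e (ar s))) as" if "as \<in> lists E" "length as = ar s" for as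
      using rep that unfolding F_def by simp
    show "dim_le q e (ops s (evec e (ar s))) (ar s)"
      unfolding dim_le_def indep_of_def
    proof (intro allI impI)
      fix n assume n: "ar s < n"
      let ?L = "map e [1..<n] @ [e (Suc n)]"
      have l: "length ?L = n" using n by simp
      have "q n (ops s (evec e (ar s))) ?L = ops s (map (\<lambda>x. q n x ?L) (evec e (ar s)))"
      proof -
        have l2: "length (evec e (ar s)) = ar s" by simp
        show ?thesis using C6[OF CA evecE l2 indL(1) l] .
      qed
      also have "map (\<lambda>x. q n x ?L) (evec e (ar s)) = take (ar s) ?L"
        using q_evec[OF CA indL(1) l] n by simp
      also have "\<dots> = evec e (ar s)" using indL(3) n by blast
      finally show "q n (ops s (evec e (ar s))) ?L = ops s (evec e (ar s))" .
    qed
  qed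
next
  case (clo_comp n f k gs)
  define F where "F = f (evec e n)"
  define Gs where "Gs = map (\<lambda>i. gs i (evec e k)) [0..<n]"
  have fr: "\<And>xs. xs \<in> lists E \<Longrightarrow> length xs = n \<Longrightarrow> f xs \<in> E" "dim_le q e F n"
    "\<And>as. as \<in> lists E \<Longrightarrow> length as = n \<Longrightarrow> f as = q n F as"
    using reprD[OF clo_comp.IH(1)] unfolding F_def by blast+
  have gr: "\<And>xs. xs \<in> lists E \<Longrightarrow> length xs = k \<Longrightarrow> gs i xs \<in> E" "dim_le q e (gs i (evec e k)) k"
    "\<And>as. as \<in> lists E \<Longrightarrow> length as = k \<Longrightarrow> gs i as = q k (gs i (evec e k)) as"
    if "i < n" for i
    using reprD[OF clo_comp.IH(2)[rule_format, OF that, THEN conjunct2]] by blast+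
  have FE: "F \<in> E" unfolding F_def using fr(1) evecE by simp
  have GsE: "Gs \<in> lists E" "length Gs = n" unfolding Gs_def using gr(1) evecE by auto
  have h_e: "f (map (\<lambda>i. gs i (evec e k)) [0..<n]) = q n F Gs"
    using fr(3) GsE unfolding Gs_def by simp
  show ?case
  proof (unfold repr_ops_def, intro CollectI case_prodI conjI allI impI)
    show "f (map (\<lambda>i. gs i xs) [0..<n]) \<in> E" if "xs \<in> lists E" "length xs = k" for xs
    proof -
      have "map (\<lambda>i. gs i xs) [0..<n] \<in> lists E" using gr(1)[OF _ that] by auto
      then show ?thesis using fr(1) by simp
    qed
    show "f (map (\<lambda>i. gs i as) [0..<n]) = q k (f (map (\<lambda>i. gs i (evec e k)) [0..<n])) as"
      if as: "as \<in> lists E" "length as = k" for as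
    proof -
      have "f (map (\<lambda>i. gs i as) [0..<n]) = q n F (map (\<lambda>i. gs i as) [0..<n])"
      proof -
        have "map (\<lambda>i. gs i as) [0..<n] \<in> lists E" using gr(1)[OF _ as] by auto
        then show ?thesis using fr(3) by simp
      qed
      also have "\<dots> = q n F (map (\<lambda>G. q k G as) Gs)"
        unfolding Gs_def using gr(3)[OF _ as] by (auto intro!: arg_cong[where f="q n F"] map_cong)
      also have "\<dots> = q k (q n F Gs) as"
        using mixed_C5[OF CA FE fr(2) GsE as] by simp
      finally show ?thesis using h_e by simp
    qed
    show "dim_le q e (f (map (\<lambda>i. gs i (evec e k)) [0..<n])) k"
      unfolding h_e dim_le_def indep_of_def
    proof (intro allI impI)
      fix N assume N: "k < N"
      let ?L = "map e [1..<N] @ [e (Suc N)]"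
      have "q N (q n F Gs) ?L = q n F (map (\<lambda>G. q N G ?L) Gs)"
        using mixed_C5[OF CA FE fr(2) GsE indL(1) indL(2)] N by simp
      also have "map (\<lambda>G. q N G ?L) Gs = Gs"
        unfolding Gs_def using gr(2) N by (auto simp: dim_le_def indep_of_def)
      finally show "q N (q n F Gs) ?L = q n F Gs" .
    qed
  qed
next
  case (clo_restr k f g)
  define F where "F = f (evec e (Suc k))"
  have fr: "\<And>xs. xs \<in> lists E \<Longrightarrow> length xs = Suc k \<Longrightarrow> f xs \<in> E" "dim_le q e F (Suc k)"
    "\<And>as. as \<in> lists E \<Longrightarrow> length as = Suc k \<Longrightarrow> f as = q (Suc k) F as"
    using reprD[OF clo_restr.IH] unfolding F_def by blast+
  have FE: "F \<in> E" unfolding F_def using fr(1) evecE by simp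
  have ek: "e (Suc k) \<in> E" using CA_e[OF CA] by simp
  have ge: "g (evec e k) = F"
    using clo_restr.hyps(2)[rule_format, OF evecE _ ek] unfolding F_def by (simp add: upt_Suc)
  show ?case
  proof (unfold repr_ops_def, intro CollectI case_prodI conjI allI impI)
    show "g xs \<in> E" if "xs \<in> lists E" "length xs = k" for xs
      using clo_restr.hyps(2) fr(1) that ek by simp
    show "g as = q k (g (evec e k)) as" if as: "as \<in> lists E" "length as = k" for as
    proof -
      have "g as = q (Suc k) F (as @ [e (Suc k)])"
        using clo_restr.hyps(2) fr(3) as ek by simp
      also have "\<dots> = q k F as" using C4[OF CA, of k "Suc k" F as] FE as by (simp add: upt_Suc)
      finally show ?thesis using ge by simp
    qed
    show "dim_le q e (g (evec e k)) k" unfolding ge dim_le_def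
    proof (intro allI impI)
      fix n assume n: "k < n"
      show "indep_of q e F n"
      proof (cases "n = Suc k")
        case False then show ?thesis using fr(2) n by (simp add: dim_le_def)
      next
        case True
        have e2: "e (Suc (Suc k)) \<in> E" using CA_e[OF CA] by simp
        have "q (Suc k) F (evec e k @ [e (Suc (Suc k))]) = f (evec e k @ [e (Suc (Suc k))])"
          using fr(3)[of "evec e k @ [e (Suc (Suc k))]"] evecE e2 by simp
        also have "\<dots> = g (evec e k)" using clo_restr.hyps(2) evecE e2 by simp
        finally have "q (Suc k) F (evec e k @ [e (Suc (Suc k))]) = F" using ge by simp
        then show ?thesis using True unfolding indep_of_def by simp
      qed
    qed
  qed
next
  case (clo_ext k f g)
  have fg: "g (evec e k) = f (evec e k)" using clo_ext.hyps(2) evecE by simp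
  show ?case
  proof (unfold repr_ops_def, intro CollectI case_prodI conjI allI impI)
    show "g xs \<in> E" if "xs \<in> lists E" "length xs = k" for xs
      using reprD(1)[OF clo_ext.IH that] clo_ext.hyps(2) that by simp
    show "dim_le q e (g (evec e k)) k" unfolding fg by (rule reprD(2)[OF clo_ext.IH])
    show "g as = q k (g (evec e k)) as" if "as \<in> lists E" "length as = k" for as
      unfolding fg using reprD(3)[OF clo_ext.IH that] clo_ext.hyps(2) that by simp
  qed
qed

end


declare upt_Suc[simp del]

lemma gen_e_sub: "is_alg ar E ops \<Longrightarrow> (\<forall>i\<ge>1. e i \<in> E) \<Longrightarrow> gen_e ar ops e \<subseteq> E"
proof
  fix x assume a: "is_alg ar E ops" "\<forall>i\<ge>1. e i \<in> E" and x: "x \<in> gen_e ar ops e"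
  from x show "x \<in> E"
  proof (induction rule: gen_e.induct)
    case (gen_e_base i) then show ?case using a(2) by simp
  next
    case (gen_e_op xs s) then show ?case using a(1) unfolding is_alg_def by auto
  qed
qed

lemma Clo_gen: assumes sub: "gen_e ar ops e \<subseteq> E"
  shows "(k, f) \<in> Clo ar E ops \<Longrightarrow> xs \<in> lists (gen_e ar ops e) \<Longrightarrow> length xs = k \<Longrightarrow> f xs \<in> gen_e ar ops e"
proof (induction arbitrary: xs rule: Clo.induct)
  case (clo_proj i k) then show ?case by auto
next
  case (clo_basic s) then show ?case by (auto intro: gen_e.gen_e_op)
next
  case (clo_comp n f k gs)
  have "\<forall>i<n. gs i xs \<in> gen_e ar ops e" using clo_comp.IH(2) clo_comp.prems by blast
  then have "map (\<lambda>i. gs i xs) [0..<n] \<in> lists (gen_e ar ops e)" by auto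
  then show ?case using clo_comp.IH(1) by simp
next
  case (clo_restr k f g)
  have e1: "e 1 \<in> gen_e ar ops e" by (rule gen_e.gen_e_base) simp
  have "g xs = f (xs @ [e 1])" using clo_restr.hyps(2) clo_restr.prems sub e1 by auto
  also have "\<dots> \<in> gen_e ar ops e" using clo_restr.IH clo_restr.prems e1 by simp
  finally show ?case .
next
  case (clo_ext k f g)
  have "xs \<in> lists E" using clo_ext.prems sub by auto
  then have "g xs = f xs" using clo_ext.hyps(2) clo_ext.prems by simp
  then show ?case using clo_ext.IH clo_ext.prems by simp
qed

lemma map_nth_f: "map (\<lambda>i. f (xs ! i)) [0..<length xs] = map f xs"
  by (rule nth_equalityI) simp_all

lemma list_bound: fixes Q :: "nat \<Rightarrow> 'a \<Rightarrow> bool" shows "\<forall>x\<in>set xs. \<exists>N. \<forall>m\<ge>N. Q m x \<Longrightarrow> \<exists>N. \<forall>x\<in>set xs. \<forall>m\<ge>N. Q m x"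
proof (induction xs)
  case Nil then show ?case by simp
next
  case (Cons a xs)
  then obtain N1 N2 where "\<forall>m\<ge>N1. Q m a" "\<forall>x\<in>set xs. \<forall>m\<ge>N2. Q m x" by auto
  then have "\<forall>x\<in>set (a # xs). \<forall>m\<ge>max N1 N2. Q m x" by auto
  then show ?case by blast
qed

lemma down_ind: assumes "\<forall>m\<ge>N. P m" "\<And>m. k \<le> m \<Longrightarrow> P (Suc m) \<Longrightarrow> P m" shows "P k"
proof -
  have "P (k + (N - j))" for j
  proof (induction j)
    case 0 then show ?case using assms(1) by simp
  next
    case (Suc j)
    show ?case
    proof (cases "j < N")
      case True
      then have "k + (N - j) = Suc (k + (N - Suc j))" by simp
      then show ?thesis using Suc assms(2)[of "k + (N - Suc j)"] by simp
    next
      case False then show ?thesis using Suc by simp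
    qed
  qed
  from this[of N] show ?thesis by simp
qed

context
  fixes ar :: "'f \<Rightarrow> nat" and E :: "'a set" and ops and q and e
  assumes CA: "clone_alg ar E ops q e"
begin

lemma gen_e_dim: "a \<in> gen_e ar ops e \<Longrightarrow> \<exists>k. dim_le q e a k"
proof (induction rule: gen_e.induct)
  case (gen_e_base i)
  then show ?case using dim_e[OF CA, of i i] by auto
next
  case (gen_e_op xs s)
  have sub: "gen_e ar ops e \<subseteq> E" using gen_e_sub CA_alg[OF CA] CA_e[OF CA] by blast
  have xsE: "xs \<in> lists E" using gen_e_op.IH sub by auto
  have "\<forall>x\<in>set xs. \<exists>N. \<forall>m\<ge>N. dim_le q e x m"
  proof
    fix x assume "x \<in> set xs"
    then have "x \<in> {a. \<exists>k. dim_le q e a k}" using gen_e_op.IH by blast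
    then obtain k where k: "dim_le q e x k" by blast
    have "\<forall>m\<ge>k. dim_le q e x m" using dim_mono[OF CA k] by blast
    then show "\<exists>N. \<forall>m\<ge>N. dim_le q e x m" by blast
  qed
  then have "\<exists>N. \<forall>x\<in>set xs. \<forall>m\<ge>N. dim_le q e x m" by (rule list_bound)
  then obtain N where N: "\<forall>x\<in>set xs. \<forall>m\<ge>N. dim_le q e x m" by blast
  have "dim_le q e (ops s xs) N" unfolding dim_le_def indep_of_def
  proof (intro allI impI)
    fix n assume n: "N < n"
    let ?L = "map e [1..<n] @ [e (Suc n)]"
    have l: "length ?L = n" using n by simp
    have "q n (ops s xs) ?L = ops s (map (\<lambda>x. q n x ?L) xs)"
      using C6[OF CA xsE gen_e_op.hyps indL(1)[OF CA] l] .
    also have "map (\<lambda>x. q n x ?L) xs = xs"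
    proof (rule map_idI)
      fix x assume "x \<in> set xs"
      then have "dim_le q e x N" using N by simp
      then show "q n x ?L = x" using n unfolding dim_le_def indep_of_def by simp
    qed
    finally show "q n (ops s xs) ?L = ops s xs" .
  qed
  then show ?case by blast
qed

lemma gen_Clo: assumes min: "E = gen_e ar ops e"
  shows "a \<in> gen_e ar ops e \<Longrightarrow> \<exists>N. \<forall>m\<ge>N. (m, \<lambda>xs. q m a xs) \<in> Clo ar E ops"
proof (induction rule: gen_e.induct)
  case (gen_e_base i)
  have "(m, \<lambda>xs. q m (e i) xs) \<in> Clo ar E ops" if m: "i \<le> m" for m
  proof (rule Clo.clo_ext)
    show "(m, \<lambda>xs. xs ! (i - 1)) \<in> Clo ar E ops" by (rule Clo.clo_proj) (use m gen_e_base in auto)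
    show "\<forall>xs. xs \<in> lists E \<longrightarrow> length xs = m \<longrightarrow> q m (e i) xs = xs ! (i - 1)"
      using C1[OF CA, of i m] gen_e_base m by blast
  qed
  then show ?case by blast
next
  case (gen_e_op xs s)
  have xsE: "xs \<in> lists E" using gen_e_op.IH min by auto
  have "\<forall>x\<in>set xs. \<exists>N. \<forall>m\<ge>N. (m, \<lambda>ys. q m x ys) \<in> Clo ar E ops"
  proof
    fix x assume "x \<in> set xs"
    then have "x \<in> {a. \<exists>N. \<forall>m\<ge>N. (m, \<lambda>ys. q m a ys) \<in> Clo ar E ops}" using gen_e_op.IH by blast
    then show "\<exists>N. \<forall>m\<ge>N. (m, \<lambda>ys. q m x ys) \<in> Clo ar E ops" by simp
  qed
  then have "\<exists>N. \<forall>x\<in>set xs. \<forall>m\<ge>N. (m, \<lambda>ys. q m x ys) \<in> Clo ar E ops" by (rule list_bound)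
  then obtain N where N: "\<forall>x\<in>set xs. \<forall>m\<ge>N. (m, \<lambda>ys. q m x ys) \<in> Clo ar E ops" by blast
  have "(m, \<lambda>ys. q m (ops s xs) ys) \<in> Clo ar E ops" if m: "N \<le> m" for m
  proof (rule Clo.clo_ext)
    show "(m, \<lambda>ys. ops s (map (\<lambda>i. q m (xs ! i) ys) [0..<ar s])) \<in> Clo ar E ops"
    proof (rule Clo.clo_comp[OF Clo.clo_basic], intro allI impI)
      fix i assume "i < ar s"
      then have "xs ! i \<in> set xs" using gen_e_op.hyps by simp
      then show "(m, \<lambda>ys. q m (xs ! i) ys) \<in> Clo ar E ops" using N m by blast
    qed
    show "\<forall>ys. ys \<in> lists E \<longrightarrow> length ys = m \<longrightarrow>
       q m (ops s xs) ys = ops s (map (\<lambda>i. q m (xs ! i) ys) [0..<ar s])"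
    proof (intro allI impI)
      fix ys assume ys: "ys \<in> lists E" "length ys = m"
      have "map (\<lambda>i. q m (xs ! i) ys) [0..<ar s] = map (\<lambda>x. q m x ys) xs"
        using map_nth_f[of "\<lambda>x. q m x ys" xs] gen_e_op.hyps by simp
      then show "q m (ops s xs) ys = ops s (map (\<lambda>i. q m (xs ! i) ys) [0..<ar s])"
        using C6[OF CA xsE gen_e_op.hyps ys] by simp
    qed
  qed
  then show ?case by blast
qed

lemma repr_Clo: assumes min: "E = gen_e ar ops e" and r: "(k, f) \<in> repr_ops E q e"
  shows "(k, f) \<in> Clo ar E ops"
proof -
  define a where "a = f (evec e k)"
  have aE: "a \<in> E" unfolding a_def using reprD(1)[OF r] evecE[OF CA] by simp
  have da: "dim_le q e a k" unfolding a_def by (rule reprD(2)[OF r])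
  have "a \<in> gen_e ar ops e" using aE min by simp
  from gen_Clo[OF min this] obtain N where N: "\<forall>m\<ge>N. (m, \<lambda>xs. q m a xs) \<in> Clo ar E ops"
    by blast
  have "(k, \<lambda>xs. q k a xs) \<in> Clo ar E ops"
  proof (rule down_ind[where P="\<lambda>m. (m, \<lambda>xs. q m a xs) \<in> Clo ar E ops", OF N])
    fix m assume m: "k \<le> m" and P: "(Suc m, \<lambda>xs. q (Suc m) a xs) \<in> Clo ar E ops"
    show "(m, \<lambda>xs. q m a xs) \<in> Clo ar E ops"
    proof (rule Clo.clo_restr[OF P], intro allI impI)
      fix xs y assume xy: "xs \<in> lists E" "length xs = m" "y \<in> E"
      have "indep_of q e a (Suc m)" using da m unfolding dim_le_def by simp
      from indep_step[OF CA this aE xy] show "q m a xs = q (Suc m) a (xs @ [y])" by simp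
    qed
  qed
  then show ?thesis
  proof (rule Clo.clo_ext, intro allI impI)
    fix xs assume "xs \<in> lists E" "length xs = k"
    then show "f xs = q k a xs" unfolding a_def by (rule reprD(3)[OF r])
  qed
qed

end


declare upt_Suc[simp del]

lemma lists_fst: "xs \<in> lists (C \<times> D) \<Longrightarrow> map fst xs \<in> lists C" by (induction xs) auto
lemma lists_snd: "xs \<in> lists (C \<times> D) \<Longrightarrow> map snd xs \<in> lists D" by (induction xs) auto

lemma fst_prod_e: "fst \<circ> prod_e eC eD = eC" and snd_prod_e: "snd \<circ> prod_e eC eD = eD"
  by (auto simp: prod_e_def)

lemma map_fst_pe: "map fst (map (prod_e eC eD) L) = map eC L"
  and map_snd_pe: "map snd (map (prod_e eC eD) L) = map eD L"
  by (auto simp: prod_e_def)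

lemma prod_clone:
  assumes CC: "clone_alg ar C opsC qC eC" and CD: "clone_alg ar D opsD qD eD"
  shows "clone_alg ar (C \<times> D) (prod_ops opsC opsD) (prod_q qC qD) (prod_e eC eD)"
  unfolding clone_alg_def
proof (intro conjI allI impI)
  show "is_alg ar (C \<times> D) (prod_ops opsC opsD)"
    unfolding is_alg_def prod_ops_def
    using CA_ops[OF CC] CA_ops[OF CD] lists_fst lists_snd by fastforce
  show "prod_e eC eD i \<in> C \<times> D" if "1 \<le> i" for i
    using CA_e[OF CC that] CA_e[OF CD that] by (simp add: prod_e_def)
  show "prod_q qC qD n x ys \<in> C \<times> D" if "x \<in> C \<times> D" "ys \<in> lists (C \<times> D)" "length ys = n" for n x ys
    using CA_q[OF CC _ lists_fst[OF that(2)]] CA_q[OF CD _ lists_snd[OF that(2)]] that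
    unfolding prod_q_def by (simp add: mem_Times_iff)
  show "prod_q qC qD n (prod_e eC eD i) xs = xs ! (i - 1)"
    if "1 \<le> i" "i \<le> n" "xs \<in> lists (C \<times> D)" "length xs = n" for n i xs
  proof -
    have "qC n (eC i) (map fst xs) = map fst xs ! (i - 1)"
      using C1[OF CC that(1,2) lists_fst[OF that(3)]] that by simp
    moreover have "qD n (eD i) (map snd xs) = map snd xs ! (i - 1)"
      using C1[OF CD that(1,2) lists_snd[OF that(3)]] that by simp
    ultimately show ?thesis using that unfolding prod_q_def prod_e_def by simp
  qed
  show "prod_q qC qD n (prod_e eC eD j) xs = prod_e eC eD j"
    if "n < j" "xs \<in> lists (C \<times> D)" "length xs = n" for n j xs
    using C2[OF CC that(1) lists_fst[OF that(2)]] C2[OF CD that(1) lists_snd[OF that(2)]] that unfolding prod_q_def prod_e_def by simp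
  show "prod_q qC qD n x (evec (prod_e eC eD) n) = x" if "x \<in> C \<times> D" for n x
    using C3[OF CC] C3[OF CD] that unfolding prod_q_def
    by (simp add: map_fst_pe map_snd_pe mem_Times_iff fst_prod_e snd_prod_e)
  show "prod_q qC qD k x ys = prod_q qC qD n x (ys @ map (prod_e eC eD) [Suc k..<Suc n])"
    if "k < n" "x \<in> C \<times> D" "ys \<in> lists (C \<times> D)" "length ys = k" for n k x ys
    using C4[OF CC, of k n "fst x" "map fst ys"] C4[OF CD, of k n "snd x" "map snd ys"] that
      lists_fst[OF that(3)] lists_snd[OF that(3)] unfolding prod_q_def
    by (simp add: map_fst_pe map_snd_pe mem_Times_iff fst_prod_e snd_prod_e)
  show "prod_q qC qD n (prod_q qC qD n x ys) zs = prod_q qC qD n x (map (\<lambda>y. prod_q qC qD n y zs) ys)"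
    if "x \<in> C \<times> D" "ys \<in> lists (C \<times> D)" "zs \<in> lists (C \<times> D)" "length ys = n" "length zs = n" for n x ys zs
    using C5[OF CC, of "fst x" "map fst ys" "map fst zs" n] C5[OF CD, of "snd x" "map snd ys" "map snd zs" n] that
      lists_fst[OF that(2)] lists_snd[OF that(2)] lists_fst[OF that(3)] lists_snd[OF that(3)] unfolding prod_q_def
    by (simp add: mem_Times_iff o_def)
  show "prod_q qC qD n (prod_ops opsC opsD s xs) ys = prod_ops opsC opsD s (map (\<lambda>x. prod_q qC qD n x ys) xs)"
    if "xs \<in> lists (C \<times> D)" "length xs = ar s" "ys \<in> lists (C \<times> D)" "length ys = n" for s n xs ys
    using C6[OF CC, of "map fst xs" s "map fst ys" n] C6[OF CD, of "map snd xs" s "map snd ys" n] that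
      lists_fst[OF that(1)] lists_snd[OF that(1)] lists_fst[OF that(3)] lists_snd[OF that(3)] unfolding prod_q_def prod_ops_def
    by (simp add: o_def)
qed

lemma gen_e_trm: "a \<in> gen_e ar ops e \<Longrightarrow> \<exists>t. wf_trm ar t \<and> a = eval_trm ops (\<lambda>i. e (Suc i)) t"
proof (induction rule: gen_e.induct)
  case (gen_e_base i)
  then show ?case by (intro exI[of _ "Var (i - 1)"]) simp
next
  case (gen_e_op xs s)
  define T where "T = (\<lambda>x. SOME t. wf_trm ar t \<and> x = eval_trm ops (\<lambda>i. e (Suc i)) t)"
  have T: "wf_trm ar (T x) \<and> x = eval_trm ops (\<lambda>i. e (Suc i)) (T x)" if "x \<in> set xs" for x
  proof -
    have "\<exists>t. wf_trm ar t \<and> x = eval_trm ops (\<lambda>i. e (Suc i)) t" using gen_e_op.IH that by blast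
    then show ?thesis unfolding T_def by (rule someI_ex)
  qed
  have "wf_trm ar (App s (map T xs))" using T gen_e_op.hyps by auto
  moreover have "ops s xs = eval_trm ops (\<lambda>i. e (Suc i)) (App s (map T xs))"
  proof -
    have "map (eval_trm ops (\<lambda>i. e (Suc i))) (map T xs) = xs"
      using T by (induction xs) auto
    then show ?thesis by simp
  qed
  ultimately show ?case by blast
qed

lemma trm_gen_e: "wf_trm ar t \<Longrightarrow> (\<forall>i. \<rho> i \<in> gen_e ar ops e) \<Longrightarrow> eval_trm ops \<rho> t \<in> gen_e ar ops e"
proof (induction t)
  case (Var x) then show ?case by simp
next
  case (App s ts) then show ?case by (auto intro!: gen_e.gen_e_op)
qed

lemma eval_repr:
  assumes CA: "clone_alg ar E ops q e"
  shows "wf_trm ar t \<Longrightarrow> vars_trm t \<subseteq> {..<n} \<Longrightarrow> (\<forall>i<n. \<rho> i \<in> E) \<Longrightarrow>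
    eval_trm ops \<rho> t = q n (eval_trm ops (\<lambda>i. e (Suc i)) t) (map \<rho> [0..<n])"
proof (induction t)
  case (Var i)
  moreover have "map \<rho> [0..<n] \<in> lists E" using Var by auto
  ultimately have "q n (e (Suc i)) (map \<rho> [0..<n]) = map \<rho> [0..<n] ! i"
    using C1[OF CA, of "Suc i" n "map \<rho> [0..<n]"] by auto
  then show ?case using Var by simp
next
  case (App s ts)
  have tsE: "map (eval_trm ops (\<lambda>i. e (Suc i))) ts \<in> lists E"
    using eval_closed[OF CA_alg[OF CA]] CA_e[OF CA] App.prems(1) by auto
  have "q n (eval_trm ops (\<lambda>i. e (Suc i)) (App s ts)) (map \<rho> [0..<n])
      = ops s (map (\<lambda>x. q n x (map \<rho> [0..<n])) (map (eval_trm ops (\<lambda>i. e (Suc i))) ts))"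
  proof -
    have rho: "map \<rho> [0..<n] \<in> lists E" using App.prems by auto
    have l: "length (map (eval_trm ops (\<lambda>i. e (Suc i))) ts) = ar s" using App.prems by simp
    show ?thesis using C6[OF CA tsE l rho] by (simp add: o_def)
  qed
  also have "\<dots> = ops s (map (eval_trm ops \<rho>) ts)"
  proof -
    have "\<forall>x\<in>set ts. eval_trm ops \<rho> x = q n (eval_trm ops (\<lambda>i. e (Suc i)) x) (map \<rho> [0..<n])"
      using App by auto
    then have "map (\<lambda>x. q n (eval_trm ops (\<lambda>i. e (Suc i)) x) (map \<rho> [0..<n])) ts = map (eval_trm ops \<rho>) ts"
      by (intro map_cong) auto
    then show ?thesis by (simp only: map_map o_def)
  qed
  finally show ?case by simp
qed


declare upt_Suc[simp del]

lemma fst_pe_Suc: "fst \<circ> (\<lambda>i. prod_e eC eD (Suc i)) = (\<lambda>i. eC (Suc i))"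
  and snd_pe_Suc: "snd \<circ> (\<lambda>i. prod_e eC eD (Suc i)) = (\<lambda>i. eD (Suc i))"
  by (auto simp: prod_e_def)

lemma vars_bound: "\<exists>n. vars_trm t \<subseteq> {..<n} \<and> 2 \<le> n"
proof -
  obtain m where "\<forall>x\<in>vars_trm t. x < m" using finite_vars finite_nat_set_iff_bounded by blast
  then show ?thesis by (intro exI[of _ "max m 2"]) auto
qed

context
  fixes ar :: "'f \<Rightarrow> nat"
    and C :: "'c set" and opsC :: "'f \<Rightarrow> 'c list \<Rightarrow> 'c"
    and qC :: "nat \<Rightarrow> 'c \<Rightarrow> 'c list \<Rightarrow> 'c" and eC :: "nat \<Rightarrow> 'c"
    and D :: "'d set" and opsD :: "'f \<Rightarrow> 'd list \<Rightarrow> 'd"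
    and qD :: "nat \<Rightarrow> 'd \<Rightarrow> 'd list \<Rightarrow> 'd" and eD :: "nat \<Rightarrow> 'd"
  assumes CC: "clone_alg ar C opsC qC eC" and minC: "minimal_clone ar C opsC eC"
    and CD: "clone_alg ar D opsD qD eD" and minD: "minimal_clone ar D opsD eD"
begin

lemma CE: "clone_alg ar (C \<times> D) (prod_ops opsC opsD) (prod_q qC qD) (prod_e eC eD)"
  by (rule prod_clone[OF CC CD])

lemma genE_sub: "gen_e ar (prod_ops opsC opsD) (prod_e eC eD) \<subseteq> C \<times> D"
  using gen_e_sub CA_alg[OF CE] CA_e[OF CE] by blast

lemma min_indep:
  assumes min: "minimal_clone ar (C \<times> D) (prod_ops opsC opsD) (prod_e eC eD)"
  shows "indep_varieties ar (Id_of ar C opsC) (Id_of ar D opsD)"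
proof -
  have "(eC 1, eD 2) \<in> C \<times> D" using CA_e[OF CC] CA_e[OF CD] by simp
  then have "(eC 1, eD 2) \<in> gen_e ar (prod_ops opsC opsD) (prod_e eC eD)"
    using min unfolding minimal_clone_def by simp
  then obtain t where wf: "wf_trm ar t"
    and eq: "(eC 1, eD 2) = eval_trm (prod_ops opsC opsD) (\<lambda>i. prod_e eC eD (Suc i)) t"
    using gen_e_trm[OF \<open>(eC 1, eD 2) \<in> gen_e ar (prod_ops opsC opsD) (prod_e eC eD)\<close>] by blast
  have eC1: "eC 1 = eval_trm opsC (\<lambda>i. eC (Suc i)) t"
    and eD2: "eD 2 = eval_trm opsD (\<lambda>i. eD (Suc i)) t"
    using eq unfolding eval_prod fst_pe_Suc snd_pe_Suc by simp_all
  obtain n where n: "vars_trm t \<subseteq> {..<n}" "2 \<le> n" using vars_bound by blast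
  define \<sigma> :: "nat \<Rightarrow> 'f trm" where "\<sigma> = (\<lambda>i. if i = 0 then Var 0 else Var 1)"
  define t' where "t' = subst \<sigma> t"
  have wf': "wf_trm ar t'" unfolding t'_def using wf by (intro wf_subst) (auto simp: \<sigma>_def)
  have vars': "vars_trm t' \<subseteq> {0, 1}" unfolding t'_def vars_subst by (auto simp: \<sigma>_def split: if_splits)
  have ev: "eval_trm ops \<rho> t' = eval_trm ops (\<lambda>i. if i = 0 then \<rho> 0 else \<rho> 1) t" for ops :: "'f \<Rightarrow> 'x list \<Rightarrow> 'x" and \<rho>
  proof -
    have "(\<lambda>i. eval_trm ops \<rho> (\<sigma> i)) = (\<lambda>i. if i = 0 then \<rho> 0 else \<rho> 1)"
      by (auto simp: \<sigma>_def)
    then show ?thesis unfolding t'_def eval_subst by simp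
  qed
  have "(t', Var 0) \<in> Id_of ar C opsC"
    unfolding Id_of_def sat_id_def
  proof (simp, intro conjI wf' allI impI)
    fix \<rho> :: "nat \<Rightarrow> 'c" assume \<rho>: "\<forall>i. \<rho> i \<in> C"
    let ?\<rho> = "\<lambda>i. if i = 0 then \<rho> 0 else \<rho> 1"
    have "eval_trm opsC \<rho> t' = qC n (eC 1) (map ?\<rho> [0..<n])"
      unfolding ev eC1 by (rule eval_repr[OF CC wf n(1)]) (use \<rho> in auto)
    also have "\<dots> = map ?\<rho> [0..<n] ! 0"
    proof -
      have "map ?\<rho> [0..<n] \<in> lists C" using \<rho> by auto
      then show ?thesis using C1[OF CC, of 1 n "map ?\<rho> [0..<n]"] n by auto
    qed
    finally show "eval_trm opsC \<rho> t' = \<rho> 0" using n by simp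
  qed
  moreover have "(t', Var 1) \<in> Id_of ar D opsD"
    unfolding Id_of_def sat_id_def
  proof (simp, intro conjI wf' allI impI)
    fix \<rho> :: "nat \<Rightarrow> 'd" assume \<rho>: "\<forall>i. \<rho> i \<in> D"
    let ?\<rho> = "\<lambda>i. if i = 0 then \<rho> 0 else \<rho> 1"
    have "eval_trm opsD \<rho> t' = qD n (eD 2) (map ?\<rho> [0..<n])"
      unfolding ev eD2 by (rule eval_repr[OF CD wf n(1)]) (use \<rho> in auto)
    also have "\<dots> = map ?\<rho> [0..<n] ! 1"
    proof -
      have "map ?\<rho> [0..<n] \<in> lists D" using \<rho> by auto
      then show ?thesis using C1[OF CD, of 2 n "map ?\<rho> [0..<n]"] n by auto
    qed
    finally show "eval_trm opsD \<rho> t' = \<rho> (Suc 0)" using n by simp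
  qed
  ultimately show ?thesis unfolding indep_varieties_def using wf' vars' by blast
qed

lemma indep_min:
  assumes ind: "indep_varieties ar (Id_of ar C opsC) (Id_of ar D opsD)"
  shows "minimal_clone ar (C \<times> D) (prod_ops opsC opsD) (prod_e eC eD)"
proof -
  obtain t where wf: "wf_trm ar t" and tC: "(t, Var 0) \<in> Id_of ar C opsC" and tD: "(t, Var 1) \<in> Id_of ar D opsD"
    using ind unfolding indep_varieties_def by blast
  have tC': "eval_trm opsC \<rho> t = \<rho> 0" if "\<forall>i. \<rho> i \<in> C" for \<rho>
    using tC that unfolding Id_of_def sat_id_def by auto
  have tD': "eval_trm opsD \<rho> t = \<rho> 1" if "\<forall>i. \<rho> i \<in> D" for \<rho>
    using tD that unfolding Id_of_def sat_id_def by auto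
  have "C \<times> D \<subseteq> gen_e ar (prod_ops opsC opsD) (prod_e eC eD)"
  proof
    fix x assume "x \<in> C \<times> D"
    then obtain c d where x: "x = (c, d)" and c: "c \<in> C" and d: "d \<in> D" by blast
    obtain s1 where s1: "wf_trm ar s1" "c = eval_trm opsC (\<lambda>i. eC (Suc i)) s1"
      using gen_e_trm[of c ar opsC eC] c minC unfolding minimal_clone_def by blast
    obtain s2 where s2: "wf_trm ar s2" "d = eval_trm opsD (\<lambda>i. eD (Suc i)) s2"
      using gen_e_trm[of d ar opsD eD] d minD unfolding minimal_clone_def by blast
    define \<sigma> :: "nat \<Rightarrow> 'f trm" where "\<sigma> = (\<lambda>i. if i = 0 then s1 else s2)"
    define u where "u = subst \<sigma> t"
    have wfu: "wf_trm ar u" unfolding u_def using wf s1 s2 by (intro wf_subst) (auto simp: \<sigma>_def)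
    have "eval_trm (prod_ops opsC opsD) (\<lambda>i. prod_e eC eD (Suc i)) u \<in> gen_e ar (prod_ops opsC opsD) (prod_e eC eD)"
      by (rule trm_gen_e[OF wfu]) (auto intro: gen_e.gen_e_base)
    moreover have "eval_trm (prod_ops opsC opsD) (\<lambda>i. prod_e eC eD (Suc i)) u = (c, d)"
    proof -
      have s1C: "eval_trm opsC (\<lambda>i. eC (Suc i)) s1 \<in> C"
        using eval_closed[OF CA_alg[OF CC] s1(1)] CA_e[OF CC] by auto
      have s2C: "eval_trm opsC (\<lambda>i. eC (Suc i)) s2 \<in> C"
        using eval_closed[OF CA_alg[OF CC] s2(1)] CA_e[OF CC] by auto
      have s1D: "eval_trm opsD (\<lambda>i. eD (Suc i)) s1 \<in> D"
        using eval_closed[OF CA_alg[OF CD] s1(1)] CA_e[OF CD] by auto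
      have s2D: "eval_trm opsD (\<lambda>i. eD (Suc i)) s2 \<in> D"
        using eval_closed[OF CA_alg[OF CD] s2(1)] CA_e[OF CD] by auto
      have "eval_trm opsC (\<lambda>i. eC (Suc i)) u = c"
        unfolding u_def eval_subst
        by (subst tC') (use s1C s2C s1 in \<open>auto simp: \<sigma>_def\<close>)
      moreover have "eval_trm opsD (\<lambda>i. eD (Suc i)) u = d"
        unfolding u_def eval_subst
        by (subst tD') (use s1D s2D s2 in \<open>auto simp: \<sigma>_def\<close>)
      ultimately show ?thesis unfolding eval_prod fst_pe_Suc snd_pe_Suc by simp
    qed
    ultimately show "x \<in> gen_e ar (prod_ops opsC opsD) (prod_e eC eD)" using x by simp
  qed
  then show ?thesis unfolding minimal_clone_def using genE_sub by blast
qed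

lemma min_Clo:
  assumes min: "minimal_clone ar (C \<times> D) (prod_ops opsC opsD) (prod_e eC eD)"
  shows "Clo ar (C \<times> D) (prod_ops opsC opsD) = repr_ops (C \<times> D) (prod_q qC qD) (prod_e eC eD)"
proof (rule set_eqI)
  fix x show "x \<in> Clo ar (C \<times> D) (prod_ops opsC opsD) \<longleftrightarrow> x \<in> repr_ops (C \<times> D) (prod_q qC qD) (prod_e eC eD)"
    using Clo_repr[OF CE] repr_Clo[OF CE min[unfolded minimal_clone_def]] by (cases x) blast
qed

lemma Clo_min:
  assumes eq: "Clo ar (C \<times> D) (prod_ops opsC opsD) = repr_ops (C \<times> D) (prod_q qC qD) (prod_e eC eD)"
  shows "minimal_clone ar (C \<times> D) (prod_ops opsC opsD) (prod_e eC eD)"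
proof -
  have "C \<times> D \<subseteq> gen_e ar (prod_ops opsC opsD) (prod_e eC eD)"
  proof
    fix x assume "x \<in> C \<times> D"
    then obtain c d where x: "x = (c, d)" and c: "c \<in> C" and d: "d \<in> D" by blast
    obtain kc where kc: "dim_le qC eC c kc" using gen_e_dim[OF CC] c minC unfolding minimal_clone_def by blast
    obtain kd where kd: "dim_le qD eD d kd" using gen_e_dim[OF CD] d minD unfolding minimal_clone_def by blast
    define k where "k = max kc kd"
    have kc': "dim_le qC eC c k" using dim_mono[OF CC kc] k_def by simp
    have kd': "dim_le qD eD d k" using dim_mono[OF CD kd] k_def by simp
    have dk: "dim_le (prod_q qC qD) (prod_e eC eD) (c, d) k"
      unfolding dim_le_def indep_of_def
    proof (intro allI impI)
      fix n assume n: "k < n"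
      have "qC n c (map eC [1..<n] @ [eC (Suc n)]) = c" using kc' n unfolding dim_le_def indep_of_def by simp
      moreover have "qD n d (map eD [1..<n] @ [eD (Suc n)]) = d" using kd' n unfolding dim_le_def indep_of_def by simp
      ultimately show "prod_q qC qD n (c, d) (map (prod_e eC eD) [1..<n] @ [prod_e eC eD (Suc n)]) = (c, d)"
        unfolding prod_q_def by (simp add: map_fst_pe map_snd_pe fst_prod_e snd_prod_e, simp add: prod_e_def)
    qed
    define f where "f = (\<lambda>xs. prod_q qC qD k (c, d) xs)"
    have cd: "(c, d) \<in> C \<times> D" using c d by simp
    have fe: "f (evec (prod_e eC eD) k) = (c, d)" unfolding f_def by (rule C3[OF CE cd])
    have "(k, f) \<in> repr_ops (C \<times> D) (prod_q qC qD) (prod_e eC eD)"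
    proof (unfold repr_ops_def, intro CollectI case_prodI conjI allI impI)
      show "f xs \<in> C \<times> D" if "xs \<in> lists (C \<times> D)" "length xs = k" for xs
        unfolding f_def using CA_q[OF CE cd that] .
      show "dim_le (prod_q qC qD) (prod_e eC eD) (f (evec (prod_e eC eD) k)) k" unfolding fe by (rule dk)
      show "f as = prod_q qC qD k (f (evec (prod_e eC eD) k)) as" for as
        unfolding fe by (simp add: f_def)
    qed
    then have Cl: "(k, f) \<in> Clo ar (C \<times> D) (prod_ops opsC opsD)" using eq by simp
    have "evec (prod_e eC eD) k \<in> lists (gen_e ar (prod_ops opsC opsD) (prod_e eC eD))"
    proof -
      have "\<forall>i\<in>set [1..<Suc k]. prod_e eC eD i \<in> gen_e ar (prod_ops opsC opsD) (prod_e eC eD)"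
        by (auto intro: gen_e.gen_e_base)
      then show ?thesis by (simp add: in_lists_conv_set)
    qed
    from Clo_gen[OF genE_sub Cl this] fe x
    show "x \<in> gen_e ar (prod_ops opsC opsD) (prod_e eC eD)" by simp
  qed
  then show ?thesis unfolding minimal_clone_def using genE_sub by blast
qed

end


declare upt_Suc[simp del]

definition bin :: "'f trm \<Rightarrow> 'f trm \<Rightarrow> 'f trm \<Rightarrow> 'f trm" where
  "bin t p q = subst (\<lambda>i. if i = 0 then p else q) t"

lemma eval_bin: "eval_trm ops \<rho> (bin t p q) = eval_trm ops (\<lambda>i. if i = 0 then eval_trm ops \<rho> p else eval_trm ops \<rho> q) t"
proof -
  have "(\<lambda>i. eval_trm ops \<rho> (if i = 0 then p else q)) = (\<lambda>i. if i = 0 then eval_trm ops \<rho> p else eval_trm ops \<rho> q)"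
    by auto
  then show ?thesis unfolding bin_def eval_subst by (rule arg_cong[where f="\<lambda>r. eval_trm ops r t"])
qed

lemma wf_bin: "wf_trm ar t \<Longrightarrow> wf_trm ar p \<Longrightarrow> wf_trm ar q \<Longrightarrow> wf_trm ar (bin t p q)"
  unfolding bin_def by (rule wf_subst) auto

definition shift :: "'f trm \<Rightarrow> 'f trm" where "shift p = subst (\<lambda>i. Var (Suc i)) p"

lemma eval_shift: "eval_trm ops \<rho> (shift p) = eval_trm ops (\<lambda>i. \<rho> (Suc i)) p"
  unfolding shift_def eval_subst by simp

lemma wf_shift: "wf_trm ar p \<Longrightarrow> wf_trm ar (shift p)"
  unfolding shift_def by (rule wf_subst) auto

lemma eval_in: "is_alg ar A ops \<Longrightarrow> wf_trm ar p \<Longrightarrow> \<forall>i. \<rho> i \<in> A \<Longrightarrow> eval_trm ops \<rho> p \<in> A"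
  using eval_closed by blast

context
  fixes ar :: "'f \<Rightarrow> nat"
    and C :: "'c set" and opsC :: "'f \<Rightarrow> 'c list \<Rightarrow> 'c"
    and D :: "'d set" and opsD :: "'f \<Rightarrow> 'd list \<Rightarrow> 'd"
    and t :: "'f trm"
    and A :: "'b set" and oA :: "'f \<Rightarrow> 'b list \<Rightarrow> 'b"
  assumes algC: "is_alg ar C opsC" and algD: "is_alg ar D opsD" and wft: "wf_trm ar t"
    and tC: "(t, Var 0) \<in> Id_of ar C opsC" and tD: "(t, Var 1) \<in> Id_of ar D opsD"
    and MA: "(A, oA) \<in> Mod ar (Id_of ar C opsC \<inter> Id_of ar D opsD)"
begin

lemma tC': "\<forall>i. \<rho> i \<in> C \<Longrightarrow> eval_trm opsC \<rho> t = \<rho> 0"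
  using tC unfolding Id_of_def sat_id_def by auto
lemma tD': "\<forall>i. \<rho> i \<in> D \<Longrightarrow> eval_trm opsD \<rho> t = \<rho> 1"
  using tD unfolding Id_of_def sat_id_def by auto

lemma binC: "eval_trm opsC \<rho> p \<in> C \<Longrightarrow> eval_trm opsC \<rho> q \<in> C \<Longrightarrow> eval_trm opsC \<rho> (bin t p q) = eval_trm opsC \<rho> p"
  unfolding eval_bin by (subst tC') auto
lemma binD: "eval_trm opsD \<rho> p \<in> D \<Longrightarrow> eval_trm opsD \<rho> q \<in> D \<Longrightarrow> eval_trm opsD \<rho> (bin t p q) = eval_trm opsD \<rho> q"
  unfolding eval_bin by (subst tD') auto

lemma algA: "is_alg ar A oA" and neA: "A \<noteq> {}"
  using MA unfolding Mod_def by auto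

lemma transfer:
  assumes wf: "wf_trm ar p" "wf_trm ar q"
    and vC: "\<And>\<rho>. \<forall>i. \<rho> i \<in> C \<Longrightarrow> eval_trm opsC \<rho> p = eval_trm opsC \<rho> q"
    and vD: "\<And>\<rho>. \<forall>i. \<rho> i \<in> D \<Longrightarrow> eval_trm opsD \<rho> p = eval_trm opsD \<rho> q"
    and \<rho>: "\<forall>i. \<rho> i \<in> A"
  shows "eval_trm oA \<rho> p = eval_trm oA \<rho> q"
proof -
  have "(p, q) \<in> Id_of ar C opsC \<inter> Id_of ar D opsD"
    unfolding Id_of_def sat_id_def using wf vC vD by auto
  then have "sat_id A oA (p, q)" using MA unfolding Mod_def by auto
  then show ?thesis using \<rho> unfolding sat_id_def by auto
qed

definition tA :: "'b \<Rightarrow> 'b \<Rightarrow> 'b" where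
  "tA x y = eval_trm oA (\<lambda>i. if i = 0 then x else y) t"

lemma eval_binA: "eval_trm oA \<rho> (bin t p q) = tA (eval_trm oA \<rho> p) (eval_trm oA \<rho> q)"
  unfolding eval_bin tA_def ..

lemma tA_in: "x \<in> A \<Longrightarrow> y \<in> A \<Longrightarrow> tA x y \<in> A"
  unfolding tA_def by (rule eval_in[OF algA wft]) auto

lemma V: "wf_trm ar (Var i :: 'f trm)" by simp

lemma I1: assumes x: "x \<in> A" shows "tA x x = x"
proof -
  have "eval_trm oA (\<lambda>i. x) (bin t (Var 0) (Var 0)) = eval_trm oA (\<lambda>i. x) (Var 0)"
    by (rule transfer[OF wf_bin[OF wft V V] V]) (use x binC binD in auto)
  then show ?thesis unfolding eval_binA by simp
qed

lemma I2: assumes "x \<in> A" "y \<in> A" "z \<in> A" shows "tA (tA x y) z = tA x z"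
proof -
  let ?\<rho> = "\<lambda>i::nat. if i = 0 then x else if i = 1 then y else z"
  have "eval_trm oA ?\<rho> (bin t (bin t (Var 0) (Var 1)) (Var 2)) = eval_trm oA ?\<rho> (bin t (Var 0) (Var 2))"
  proof (rule transfer[OF wf_bin[OF wft wf_bin[OF wft V V] V] wf_bin[OF wft V V]])
    fix \<rho> :: "nat \<Rightarrow> 'c" assume r: "\<forall>i. \<rho> i \<in> C"
    then show "eval_trm opsC \<rho> (bin t (bin t (Var 0) (Var 1)) (Var 2)) = eval_trm opsC \<rho> (bin t (Var 0) (Var 2))"
      by (simp add: binC)
  next
    fix \<rho> :: "nat \<Rightarrow> 'd" assume r: "\<forall>i. \<rho> i \<in> D"
    then show "eval_trm opsD \<rho> (bin t (bin t (Var 0) (Var 1)) (Var 2)) = eval_trm opsD \<rho> (bin t (Var 0) (Var 2))"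
      using binD eval_in[OF algD wf_bin[OF wft V V] r] by simp
  qed (use assms in auto)
  then show ?thesis unfolding eval_binA by simp
qed

lemma I3: assumes "x \<in> A" "y \<in> A" "z \<in> A" shows "tA x (tA y z) = tA x z"
proof -
  let ?\<rho> = "\<lambda>i::nat. if i = 0 then x else if i = 1 then y else z"
  have "eval_trm oA ?\<rho> (bin t (Var 0) (bin t (Var 1) (Var 2))) = eval_trm oA ?\<rho> (bin t (Var 0) (Var 2))"
  proof (rule transfer[OF wf_bin[OF wft V wf_bin[OF wft V V]] wf_bin[OF wft V V]])
    fix \<rho> :: "nat \<Rightarrow> 'c" assume r: "\<forall>i. \<rho> i \<in> C"
    then show "eval_trm opsC \<rho> (bin t (Var 0) (bin t (Var 1) (Var 2))) = eval_trm opsC \<rho> (bin t (Var 0) (Var 2))"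
      using binC eval_in[OF algC wf_bin[OF wft V V] r] by simp
  next
    fix \<rho> :: "nat \<Rightarrow> 'd" assume r: "\<forall>i. \<rho> i \<in> D"
    then show "eval_trm opsD \<rho> (bin t (Var 0) (bin t (Var 1) (Var 2))) = eval_trm opsD \<rho> (bin t (Var 0) (Var 2))"
      by (simp add: binD)
  qed (use assms in auto)
  then show ?thesis unfolding eval_binA by simp
qed

lemma I4: assumes xs: "xs \<in> lists A" "length xs = ar s" and ys: "ys \<in> lists A" "length ys = ar s"
  shows "oA s (map (\<lambda>i. tA (xs ! i) (ys ! i)) [0..<ar s]) = tA (oA s xs) (oA s ys)"
proof -
  let ?n = "ar s"
  let ?P = "App s (map (\<lambda>i. bin t (Var (2*i)) (Var (2*i+1))) [0..<?n])"
  let ?L = "App s (map (\<lambda>i. Var (2*i)) [0..<?n])"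
  let ?R = "App s (map (\<lambda>i. Var (2*i+1)) [0..<?n])"
  let ?Q = "bin t ?L ?R"
  have wfP: "wf_trm ar ?P" using wf_bin[OF wft V V] by auto
  have wfL: "wf_trm ar ?L" and wfR: "wf_trm ar ?R" by auto
  have wfQ: "wf_trm ar ?Q" by (rule wf_bin[OF wft wfL wfR])
  obtain a0 where a0: "a0 \<in> A" using neA by blast
  define \<rho> where "\<rho> = (\<lambda>j. if j div 2 < ?n then (if even j then xs ! (j div 2) else ys ! (j div 2)) else a0)"
  have \<rho>A: "\<forall>j. \<rho> j \<in> A" unfolding \<rho>_def using xs ys a0 by (auto simp: in_lists_conv_set)
  have "eval_trm oA \<rho> ?P = eval_trm oA \<rho> ?Q"
  proof (rule transfer[OF wfP wfQ _ _ \<rho>A])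
    fix r :: "nat \<Rightarrow> 'c" assume r: "\<forall>i. r i \<in> C"
    have "eval_trm opsC r ?Q = eval_trm opsC r ?L"
      by (rule binC) (use eval_in[OF algC wfL r] eval_in[OF algC wfR r] in auto)
    moreover have "eval_trm opsC r ?P = eval_trm opsC r ?L"
      using r by (simp add: binC o_def)
    ultimately show "eval_trm opsC r ?P = eval_trm opsC r ?Q" by simp
  next
    fix r :: "nat \<Rightarrow> 'd" assume r: "\<forall>i. r i \<in> D"
    have "eval_trm opsD r ?Q = eval_trm opsD r ?R"
      by (rule binD) (use eval_in[OF algD wfL r] eval_in[OF algD wfR r] in auto)
    moreover have "eval_trm opsD r ?P = eval_trm opsD r ?R"
      using r by (simp add: binD o_def)
    ultimately show "eval_trm opsD r ?P = eval_trm opsD r ?Q" by simp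
  qed
  moreover have "eval_trm oA \<rho> ?P = oA s (map (\<lambda>i. tA (xs ! i) (ys ! i)) [0..<ar s])"
  proof -
    have "map (\<lambda>i. tA (\<rho> (2*i)) (\<rho> (2*i+1))) [0..<?n] = map (\<lambda>i. tA (xs ! i) (ys ! i)) [0..<?n]"
      by (rule map_cong) (auto simp: \<rho>_def)
    then show ?thesis by (simp add: eval_binA o_def del: map_eq_conv)
  qed
  moreover have "map (\<lambda>i. \<rho> (2 * i)) [0..<?n] = xs"
    by (rule nth_equalityI) (use xs in \<open>auto simp: \<rho>_def\<close>)
  moreover have "map (\<lambda>i. \<rho> (2 * i + 1)) [0..<?n] = ys"
    by (rule nth_equalityI) (use ys in \<open>auto simp: \<rho>_def\<close>)
  ultimately show ?thesis by (simp add: eval_binA o_def)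
qed

lemma I5: assumes pq: "(p, q) \<in> Id_of ar C opsC" and \<rho>: "\<forall>i. \<rho> i \<in> A" and y: "y \<in> A"
  shows "tA (eval_trm oA \<rho> p) y = tA (eval_trm oA \<rho> q) y"
proof -
  have wfp: "wf_trm ar p" and wfq: "wf_trm ar q" and sC: "sat_id C opsC (p, q)"
    using pq unfolding Id_of_def by auto
  define \<rho>' where "\<rho>' = (\<lambda>i. if i = 0 then y else \<rho> (i - 1))"
  have \<rho>'A: "\<forall>i. \<rho>' i \<in> A" unfolding \<rho>'_def using \<rho> y by auto
  have "eval_trm oA \<rho>' (bin t (shift p) (Var 0)) = eval_trm oA \<rho>' (bin t (shift q) (Var 0))"
  proof (rule transfer[OF wf_bin[OF wft wf_shift[OF wfp] V] wf_bin[OF wft wf_shift[OF wfq] V] _ _ \<rho>'A])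
    fix r :: "nat \<Rightarrow> 'c" assume r: "\<forall>i. r i \<in> C"
    have r': "\<forall>i. r (Suc i) \<in> C" using r by simp
    have "eval_trm opsC r (bin t (shift p) (Var 0)) = eval_trm opsC (\<lambda>i. r (Suc i)) p"
      using binC eval_in[OF algC wfp r'] r by (simp add: eval_shift)
    also have "\<dots> = eval_trm opsC (\<lambda>i. r (Suc i)) q" using sC r' unfolding sat_id_def by auto
    also have "\<dots> = eval_trm opsC r (bin t (shift q) (Var 0))"
      using binC eval_in[OF algC wfq r'] r by (simp add: eval_shift)
    finally show "eval_trm opsC r (bin t (shift p) (Var 0)) = eval_trm opsC r (bin t (shift q) (Var 0))" .
  next
    fix r :: "nat \<Rightarrow> 'd" assume r: "\<forall>i. r i \<in> D"
    have r': "\<forall>i. r (Suc i) \<in> D" using r by simp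
    show "eval_trm opsD r (bin t (shift p) (Var 0)) = eval_trm opsD r (bin t (shift q) (Var 0))"
      using binD eval_in[OF algD wfp r'] eval_in[OF algD wfq r'] r by (simp add: eval_shift)
  qed
  moreover have "(\<lambda>i. \<rho>' (Suc i)) = \<rho>" unfolding \<rho>'_def by simp
  ultimately show ?thesis by (simp add: eval_binA eval_shift \<rho>'_def)
qed

lemma A_sub: "a0 \<in> A \<Longrightarrow> (\<lambda>x. tA x a0) ` A \<subseteq> A"
  using tA_in by blast

lemma EV: assumes a0: "a0 \<in> A"
  shows "wf_trm ar p \<Longrightarrow> \<forall>i. \<rho> i \<in> (\<lambda>x. tA x a0) ` A \<Longrightarrow>
    eval_trm (\<lambda>s xs. tA (oA s xs) a0) \<rho> p = tA (eval_trm oA \<rho> p) a0"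
proof (induction p)
  case (Var i)
  then obtain x where x: "x \<in> A" "\<rho> i = tA x a0" by blast
  then show ?case using I2[OF x(1) a0 a0] by simp
next
  case (App s ps)
  have \<rho>A: "\<forall>i. \<rho> i \<in> A" using App.prems(2) A_sub[OF a0] by blast
  let ?xs = "map (eval_trm oA \<rho>) ps"
  let ?ys = "replicate (ar s) a0"
  have xs: "?xs \<in> lists A" "length ?xs = ar s"
    using eval_in[OF algA _ \<rho>A] App.prems(1) by auto
  have ys: "?ys \<in> lists A" "length ?ys = ar s" using a0 by auto
  have "map (eval_trm (\<lambda>s xs. tA (oA s xs) a0) \<rho>) ps = map (\<lambda>p. tA (eval_trm oA \<rho> p) a0) ps"
  proof (rule map_cong[OF refl])
    fix p assume p: "p \<in> set ps"
    then have "wf_trm ar p" using App.prems(1) by simp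
    then show "eval_trm (\<lambda>s xs. tA (oA s xs) a0) \<rho> p = tA (eval_trm oA \<rho> p) a0"
      using App.IH[OF p] App.prems(2) by blast
  qed
  also have "\<dots> = map (\<lambda>i. tA (?xs ! i) (?ys ! i)) [0..<ar s]"
  proof (rule nth_equalityI)
    show "length (map (\<lambda>p. tA (eval_trm oA \<rho> p) a0) ps) = length (map (\<lambda>i. tA (?xs ! i) (?ys ! i)) [0..<ar s])"
      using App.prems(1) by simp
    fix i assume "i < length (map (\<lambda>p. tA (eval_trm oA \<rho> p) a0) ps)"
    then have i: "i < length ps" "i < ar s" using App.prems(1) by auto
    show "map (\<lambda>p. tA (eval_trm oA \<rho> p) a0) ps ! i = map (\<lambda>i. tA (?xs ! i) (?ys ! i)) [0..<ar s] ! i"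
      using i by simp
  qed
  finally have "eval_trm (\<lambda>s xs. tA (oA s xs) a0) \<rho> (App s ps) = tA (tA (oA s ?xs) (oA s ?ys)) a0"
    using I4[OF xs ys] by simp
  also have "\<dots> = tA (oA s ?xs) a0"
  proof (rule I2)
    show "oA s ?xs \<in> A" using algA xs unfolding is_alg_def by blast
    show "oA s ?ys \<in> A" using algA ys unfolding is_alg_def by blast
  qed (rule a0)
  finally show ?case by simp
qed

lemma HALF: assumes a0: "a0 \<in> A"
  shows "((\<lambda>x. tA x a0) ` A, \<lambda>s xs. tA (oA s xs) a0) \<in> Mod ar (Id_of ar C opsC)"
  unfolding Mod_def
proof (intro CollectI case_prodI conjI ballI)
  show "(\<lambda>x. tA x a0) ` A \<noteq> {}" using a0 by blast
  show "is_alg ar ((\<lambda>x. tA x a0) ` A) (\<lambda>s xs. tA (oA s xs) a0)"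
    unfolding is_alg_def
  proof (intro allI impI)
    fix s xs assume xs: "xs \<in> lists ((\<lambda>x. tA x a0) ` A)" "length xs = ar s"
    have "xs \<in> lists A" using lists_mono[OF A_sub[OF a0]] xs(1) by blast
    then have "oA s xs \<in> A" using algA xs(2) unfolding is_alg_def by blast
    then show "tA (oA s xs) a0 \<in> (\<lambda>x. tA x a0) ` A" by blast
  qed
  fix st assume st: "st \<in> Id_of ar C opsC"
  obtain p q where pq: "st = (p, q)" by (cases st)
  have wf: "wf_trm ar p" "wf_trm ar q" using st pq unfolding Id_of_def by auto
  show "sat_id ((\<lambda>x. tA x a0) ` A) (\<lambda>s xs. tA (oA s xs) a0) st"
    unfolding pq sat_id_def
  proof (intro allI impI)
    fix \<rho> :: "nat \<Rightarrow> 'b" assume \<rho>: "\<forall>i. \<rho> i \<in> (\<lambda>x. tA x a0) ` A"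
    have \<rho>A: "\<forall>i. \<rho> i \<in> A" using \<rho> A_sub[OF a0] by blast
    show "eval_trm (\<lambda>s xs. tA (oA s xs) a0) \<rho> (fst (p, q)) = eval_trm (\<lambda>s xs. tA (oA s xs) a0) \<rho> (snd (p, q))"
      using EV[OF a0 wf(1) \<rho>] EV[OF a0 wf(2) \<rho>] I5[OF st[unfolded pq] \<rho>A a0] by simp
  qed
qed

lemma HALFx: assumes a0: "a0 \<in> A"
  shows "((\<lambda>x. eval_trm oA (\<lambda>i. if i = 0 then x else a0) t) ` A,
          \<lambda>s xs. eval_trm oA (\<lambda>i. if i = 0 then oA s xs else a0) t) \<in> Mod ar (Id_of ar C opsC)"
  using HALF[OF a0] unfolding tA_def .

lemma map_tA: assumes xs: "xs \<in> lists A" "length xs = ar s" and a0: "a0 \<in> A"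
  shows "oA s (map (\<lambda>x. tA x a0) xs) = tA (oA s xs) (oA s (replicate (ar s) a0))"
    and "oA s (map (\<lambda>x. tA a0 x) xs) = tA (oA s (replicate (ar s) a0)) (oA s xs)"
proof -
  have ys: "replicate (ar s) a0 \<in> lists A" "length (replicate (ar s) a0) = ar s" using a0 by auto
  have "map (\<lambda>x. tA x a0) xs = map (\<lambda>i. tA (xs ! i) (replicate (ar s) a0 ! i)) [0..<ar s]"
    by (rule nth_equalityI) (use xs in auto)
  then show "oA s (map (\<lambda>x. tA x a0) xs) = tA (oA s xs) (oA s (replicate (ar s) a0))"
    using I4[OF xs ys] by simp
  have "map (\<lambda>x. tA a0 x) xs = map (\<lambda>i. tA (replicate (ar s) a0 ! i) (xs ! i)) [0..<ar s]"
    by (rule nth_equalityI) (use xs in auto)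
  then show "oA s (map (\<lambda>x. tA a0 x) xs) = tA (oA s (replicate (ar s) a0)) (oA s xs)"
    using I4[OF ys xs] by simp
qed

lemma ISO: assumes a0: "a0 \<in> A"
  and H2: "((\<lambda>x. eval_trm oA (\<lambda>i. if i = 0 then a0 else x) t) ` A,
          \<lambda>s xs. eval_trm oA (\<lambda>i. if i = 0 then a0 else oA s xs) t) \<in> Mod ar (Id_of ar D opsD)"
  shows "(A, oA) \<in> prod_variety ar (Mod ar (Id_of ar C opsC)) (Mod ar (Id_of ar D opsD))"
proof -
  define A1 where "A1 = (\<lambda>x. tA x a0) ` A"
  define ops1 where "ops1 = (\<lambda>s xs. tA (oA s xs) a0)"
  define A2 where "A2 = (\<lambda>x. tA a0 x) ` A"
  define ops2 where "ops2 = (\<lambda>s xs. tA a0 (oA s xs))"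
  have M1: "(A1, ops1) \<in> Mod ar (Id_of ar C opsC)" unfolding A1_def ops1_def by (rule HALF[OF a0])
  have M2: "(A2, ops2) \<in> Mod ar (Id_of ar D opsD)" unfolding A2_def ops2_def tA_def by (rule H2)
  define h where "h = (\<lambda>x. (tA x a0, tA a0 x))"
  have inv: "tA (fst (h x)) (snd (h x)) = x" if x: "x \<in> A" for x
  proof -
    have "tA (tA x a0) (tA a0 x) = tA x (tA a0 x)" using I2 x a0 tA_in by blast
    also have "\<dots> = tA x x" using I3 x a0 by blast
    also have "\<dots> = x" using I1 x by blast
    finally show ?thesis unfolding h_def by simp
  qed
  have bij: "bij_betw h A (A1 \<times> A2)"
    unfolding bij_betw_def
  proof
    show "inj_on h A"
    proof (rule inj_onI)
      fix x y assume "x \<in> A" "y \<in> A" "h x = h y"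
      then show "x = y" using inv by metis
    qed
    show "h ` A = A1 \<times> A2"
    proof
      show "h ` A \<subseteq> A1 \<times> A2" unfolding h_def A1_def A2_def by auto
      show "A1 \<times> A2 \<subseteq> h ` A"
      proof
        fix z assume "z \<in> A1 \<times> A2"
        then obtain u v where z: "z = (tA u a0, tA a0 v)" and uv: "u \<in> A" "v \<in> A"
          unfolding A1_def A2_def by blast
        have "h (tA u v) = z" unfolding h_def z using I2[OF uv a0] I3[OF a0 uv] by simp
        moreover have "tA u v \<in> A" using tA_in uv by blast
        ultimately show "z \<in> h ` A" by blast
      qed
    qed
  qed
  have hom: "h (oA s xs) = prod_ops ops1 ops2 s (map h xs)" if xs: "xs \<in> lists A" "length xs = ar s" for s xs
  proof -
    let ?w = "oA s (replicate (ar s) a0)"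
    have "replicate (ar s) a0 \<in> lists A" using a0 by auto
    then have w: "?w \<in> A" using algA unfolding is_alg_def by simp
    have oxs: "oA s xs \<in> A" using algA xs unfolding is_alg_def by auto
    have "ops1 s (map fst (map h xs)) = tA (oA s (map (\<lambda>x. tA x a0) xs)) a0"
      unfolding ops1_def h_def by (simp add: o_def)
    also have "\<dots> = tA (tA (oA s xs) ?w) a0" using map_tA(1)[OF xs a0] by simp
    also have "\<dots> = tA (oA s xs) a0" by (rule I2[OF oxs w a0])
    finally have 1: "ops1 s (map fst (map h xs)) = tA (oA s xs) a0" .
    have "ops2 s (map snd (map h xs)) = tA a0 (oA s (map (\<lambda>x. tA a0 x) xs))"
      unfolding ops2_def h_def by (simp add: o_def)
    also have "\<dots> = tA a0 (tA ?w (oA s xs))" using map_tA(2)[OF xs a0] by simp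
    also have "\<dots> = tA a0 (oA s xs)" by (rule I3[OF a0 w oxs])
    finally have 2: "ops2 s (map snd (map h xs)) = tA a0 (oA s xs)" .
    show ?thesis unfolding prod_ops_def using 1 2 by (simp add: h_def)
  qed
  have "alg_iso ar A oA (A1 \<times> A2) (prod_ops ops1 ops2)"
    unfolding alg_iso_def using bij hom by blast
  then show ?thesis unfolding prod_variety_def using algA neA M1 M2 by blast
qed

end


lemma sat_prod: "sat_id A1 o1 st \<Longrightarrow> sat_id A2 o2 st \<Longrightarrow> sat_id (A1 \<times> A2) (prod_ops o1 o2) st"
  unfolding sat_id_def eval_prod
proof (intro allI impI)
  fix \<rho> :: "nat \<Rightarrow> _" assume h1: "\<forall>\<rho>. (\<forall>i. \<rho> i \<in> A1) \<longrightarrow> eval_trm o1 \<rho> (fst st) = eval_trm o1 \<rho> (snd st)"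
    and h2: "\<forall>\<rho>. (\<forall>i. \<rho> i \<in> A2) \<longrightarrow> eval_trm o2 \<rho> (fst st) = eval_trm o2 \<rho> (snd st)"
    and r: "\<forall>i. \<rho> i \<in> A1 \<times> A2"
  have "\<forall>i. (fst \<circ> \<rho>) i \<in> A1" "\<forall>i. (snd \<circ> \<rho>) i \<in> A2" using r by (auto simp: mem_Times_iff)
  then show "(eval_trm o1 (fst \<circ> \<rho>) (fst st), eval_trm o2 (snd \<circ> \<rho>) (fst st)) =
         (eval_trm o1 (fst \<circ> \<rho>) (snd st), eval_trm o2 (snd \<circ> \<rho>) (snd st))"
    using h1[rule_format, of "fst \<circ> \<rho>"] h2[rule_format, of "snd \<circ> \<rho>"] by simp
qed

lemma sat_prod_fst: assumes "b \<in> A2" "sat_id (A1 \<times> A2) (prod_ops o1 o2) st" shows "sat_id A1 o1 st"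
  unfolding sat_id_def
proof (intro allI impI)
  fix \<rho> :: "nat \<Rightarrow> _" assume r: "\<forall>i. \<rho> i \<in> A1"
  have "\<forall>i. (\<lambda>i. (\<rho> i, b)) i \<in> A1 \<times> A2" using r assms(1) by simp
  then have "eval_trm (prod_ops o1 o2) (\<lambda>i. (\<rho> i, b)) (fst st) = eval_trm (prod_ops o1 o2) (\<lambda>i. (\<rho> i, b)) (snd st)"
    using assms(2)[unfolded sat_id_def, rule_format, of "\<lambda>i. (\<rho> i, b)"] by simp
  then show "eval_trm o1 \<rho> (fst st) = eval_trm o1 \<rho> (snd st)" unfolding eval_prod by (simp add: o_def)
qed

lemma sat_prod_snd: assumes "a \<in> A1" "sat_id (A1 \<times> A2) (prod_ops o1 o2) st" shows "sat_id A2 o2 st"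
  unfolding sat_id_def
proof (intro allI impI)
  fix \<rho> :: "nat \<Rightarrow> _" assume r: "\<forall>i. \<rho> i \<in> A2"
  have "\<forall>i. (\<lambda>i. (a, \<rho> i)) i \<in> A1 \<times> A2" using r assms(1) by simp
  then have "eval_trm (prod_ops o1 o2) (\<lambda>i. (a, \<rho> i)) (fst st) = eval_trm (prod_ops o1 o2) (\<lambda>i. (a, \<rho> i)) (snd st)"
    using assms(2)[unfolded sat_id_def, rule_format, of "\<lambda>i. (a, \<rho> i)"] by simp
  then show "eval_trm o2 \<rho> (fst st) = eval_trm o2 \<rho> (snd st)" unfolding eval_prod by (simp add: o_def)
qed

lemma Id_prod: fixes ar :: "'f \<Rightarrow> nat" assumes "C \<noteq> {}" "D \<noteq> {}"
  shows "Id_of ar (C \<times> D) (prod_ops oC oD) = Id_of ar C oC \<inter> Id_of ar D oD"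
proof -
  obtain c d where cd: "c \<in> C" "d \<in> D" using assms by blast
  show ?thesis
  proof (rule set_eqI)
    fix st :: "'f trm \<times> 'f trm"
    obtain p q where pq: "st = (p, q)" by (cases st)
    have "sat_id (C \<times> D) (prod_ops oC oD) (p, q) \<longleftrightarrow> sat_id C oC (p, q) \<and> sat_id D oD (p, q)"
      using sat_prod[of C oC "(p, q)" D oD] sat_prod_fst[OF cd(2)] sat_prod_snd[OF cd(1)] by blast
    then show "st \<in> Id_of ar (C \<times> D) (prod_ops oC oD) \<longleftrightarrow> st \<in> Id_of ar C oC \<inter> Id_of ar D oD"
      unfolding pq Id_of_def by blast
  qed
qed

lemma hom_eval:
  assumes alg: "is_alg ar A oA"
    and H: "\<forall>s xs. xs \<in> lists A \<longrightarrow> length xs = ar s \<longrightarrow> h (oA s xs) = oB s (map h xs)"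
  shows "wf_trm ar p \<Longrightarrow> \<forall>i. \<rho> i \<in> A \<Longrightarrow> h (eval_trm oA \<rho> p) = eval_trm oB (h \<circ> \<rho>) p"
proof (induction p)
  case (Var x) then show ?case by simp
next
  case (App s ps)
  have "map (eval_trm oA \<rho>) ps \<in> lists A" using eval_in[OF alg] App.prems by auto
  then have "h (eval_trm oA \<rho> (App s ps)) = oB s (map h (map (eval_trm oA \<rho>) ps))"
    using H App.prems by simp
  also have "map h (map (eval_trm oA \<rho>) ps) = map (eval_trm oB (h \<circ> \<rho>)) ps"
    using App by (auto simp: comp_def)
  finally show ?case by (simp add: comp_def)
qed

lemma iso_sat:
  assumes iso: "alg_iso ar A oA B oB" and alg: "is_alg ar A oA"
    and wf: "wf_trm ar p" "wf_trm ar q" and sB: "sat_id B oB (p, q)"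
  shows "sat_id A oA (p, q)"
proof -
  obtain h where bij: "bij_betw h A B"
    and H: "\<forall>s xs. xs \<in> lists A \<longrightarrow> length xs = ar s \<longrightarrow> h (oA s xs) = oB s (map h xs)"
    using iso unfolding alg_iso_def by blast
  show ?thesis unfolding sat_id_def
  proof (intro allI impI)
    fix \<rho> :: "nat \<Rightarrow> _" assume r: "\<forall>i. \<rho> i \<in> A"
    have rB: "\<forall>i. (h \<circ> \<rho>) i \<in> B" using r bij unfolding bij_betw_def by auto
    have "h (eval_trm oA \<rho> p) = h (eval_trm oA \<rho> q)"
      using hom_eval[OF alg H wf(1) r] hom_eval[OF alg H wf(2) r] sB rB unfolding sat_id_def by simp
    moreover have "eval_trm oA \<rho> p \<in> A" "eval_trm oA \<rho> q \<in> A" using eval_in[OF alg] wf r by auto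
    ultimately show "eval_trm oA \<rho> (fst (p, q)) = eval_trm oA \<rho> (snd (p, q))"
      using bij unfolding bij_betw_def inj_on_def by simp
  qed
qed

definition swp :: "'f trm \<Rightarrow> 'f trm" where "swp t = subst (\<lambda>i. if i = 0 then Var 1 else Var 0) t"

lemma eval_swp: "eval_trm ops \<rho> (swp t) = eval_trm ops (\<lambda>i. if i = 0 then \<rho> 1 else \<rho> 0) t"
proof -
  have "(\<lambda>i. eval_trm ops \<rho> (if i = 0 then Var 1 else Var 0)) = (\<lambda>i. if i = 0 then \<rho> 1 else \<rho> 0)" by auto
  then show ?thesis unfolding swp_def eval_subst by (rule arg_cong[where f="\<lambda>r. eval_trm ops r t"])
qed

lemma eval_swp2: "eval_trm ops (\<lambda>i. if i = 0 then x else y) (swp t) = eval_trm ops (\<lambda>i. if i = 0 then y else x) t"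
  unfolding eval_swp by simp

lemma VAR:
  fixes C :: "'c set" and D :: "'d set"
  assumes algC: "is_alg ar C opsC" and algD: "is_alg ar D opsD" and ne: "C \<noteq> {}" "D \<noteq> {}"
    and wft: "wf_trm ar t" and tC: "(t, Var 0) \<in> Id_of ar C opsC" and tD: "(t, Var 1) \<in> Id_of ar D opsD"
  shows "(Mod ar (Id_of ar C opsC \<inter> Id_of ar D opsD) :: ('b set \<times> ('f \<Rightarrow> 'b list \<Rightarrow> 'b)) set)
       = prod_variety ar (Mod ar (Id_of ar C opsC)) (Mod ar (Id_of ar D opsD))"
proof
  show "(Mod ar (Id_of ar C opsC \<inter> Id_of ar D opsD) :: ('b set \<times> ('f \<Rightarrow> 'b list \<Rightarrow> 'b)) set)
       \<subseteq> prod_variety ar (Mod ar (Id_of ar C opsC)) (Mod ar (Id_of ar D opsD))"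
  proof
    fix X :: "'b set \<times> ('f \<Rightarrow> 'b list \<Rightarrow> 'b)"
    assume X: "X \<in> Mod ar (Id_of ar C opsC \<inter> Id_of ar D opsD)"
    obtain A oA where XA: "X = (A, oA)" by (cases X)
    have MA: "(A, oA) \<in> Mod ar (Id_of ar C opsC \<inter> Id_of ar D opsD)" using X XA by simp
    then obtain a0 where a0: "a0 \<in> A" unfolding Mod_def by auto
    have MA': "(A, oA) \<in> Mod ar (Id_of ar D opsD \<inter> Id_of ar C opsC)" using MA by (simp add: Int_commute)
    have wft': "wf_trm ar (swp t)" unfolding swp_def by (rule wf_subst[OF wft]) auto
    have tD0: "eval_trm opsD \<rho> t = \<rho> 1" if "\<forall>i. \<rho> i \<in> D" for \<rho>
      using tD that unfolding Id_of_def sat_id_def by auto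
    have tC0: "eval_trm opsC \<rho> t = \<rho> 0" if "\<forall>i. \<rho> i \<in> C" for \<rho>
      using tC that unfolding Id_of_def sat_id_def by auto
    have tD': "(swp t, Var 0) \<in> Id_of ar D opsD"
      unfolding Id_of_def sat_id_def
    proof (intro CollectI case_prodI conjI wft' allI impI)
      fix \<rho> :: "nat \<Rightarrow> 'd" assume r: "\<forall>i. \<rho> i \<in> D"
      have "\<forall>i. (\<lambda>i. if i = 0 then \<rho> 1 else \<rho> 0) i \<in> D" using r by simp
      from tD0[OF this] show "eval_trm opsD \<rho> (fst (swp t, Var 0)) = eval_trm opsD \<rho> (snd (swp t, Var 0 :: 'f trm))"
        by (simp add: eval_swp)
    qed simp
    have tC': "(swp t, Var 1) \<in> Id_of ar C opsC"
      unfolding Id_of_def sat_id_def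
    proof (intro CollectI case_prodI conjI wft' allI impI)
      fix \<rho> :: "nat \<Rightarrow> 'c" assume r: "\<forall>i. \<rho> i \<in> C"
      have "\<forall>i. (\<lambda>i. if i = 0 then \<rho> 1 else \<rho> 0) i \<in> C" using r by simp
      from tC0[OF this] show "eval_trm opsC \<rho> (fst (swp t, Var 1)) = eval_trm opsC \<rho> (snd (swp t, Var 1 :: 'f trm))"
        by (simp add: eval_swp)
    qed simp
    have H2: "((\<lambda>x. eval_trm oA (\<lambda>i. if i = 0 then a0 else x) t) ` A,
          \<lambda>s xs. eval_trm oA (\<lambda>i. if i = 0 then a0 else oA s xs) t) \<in> Mod ar (Id_of ar D opsD)"
      using HALFx[OF algD algC wft' tD' tC' MA' a0] unfolding eval_swp2 .
    show "X \<in> prod_variety ar (Mod ar (Id_of ar C opsC)) (Mod ar (Id_of ar D opsD))"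
      unfolding XA by (rule ISO[OF algC algD wft tC tD MA a0 H2])
  qed
  show "prod_variety ar (Mod ar (Id_of ar C opsC)) (Mod ar (Id_of ar D opsD))
       \<subseteq> (Mod ar (Id_of ar C opsC \<inter> Id_of ar D opsD) :: ('b set \<times> ('f \<Rightarrow> 'b list \<Rightarrow> 'b)) set)"
  proof
    fix X :: "'b set \<times> ('f \<Rightarrow> 'b list \<Rightarrow> 'b)"
    assume X: "X \<in> prod_variety ar (Mod ar (Id_of ar C opsC)) (Mod ar (Id_of ar D opsD))"
    obtain A oA where XA: "X = (A, oA)" by (cases X)
    obtain A1 :: "'b set" and ops1 and A2 :: "'b set" and ops2 where alg: "is_alg ar A oA" and neA: "A \<noteq> {}"
      and M1: "(A1, ops1) \<in> Mod ar (Id_of ar C opsC)" and M2: "(A2, ops2) \<in> Mod ar (Id_of ar D opsD)"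
      and iso: "alg_iso ar A oA (A1 \<times> A2) (prod_ops ops1 ops2)"
    proof -
      have "(A, oA) \<in> prod_variety ar (Mod ar (Id_of ar C opsC)) (Mod ar (Id_of ar D opsD))" using X XA by simp
      then show ?thesis unfolding prod_variety_def mem_Collect_eq case_prod_conv using that by blast
    qed
    have "sat_id A oA st" if st: "st \<in> Id_of ar C opsC \<inter> Id_of ar D opsD" for st
    proof -
      obtain p q where pq: "st = (p, q)" by (cases st)
      have wf: "wf_trm ar p" "wf_trm ar q" using st pq unfolding Id_of_def by auto
      have "sat_id A1 ops1 st" using M1 st unfolding Mod_def by auto
      moreover have "sat_id A2 ops2 st" using M2 st unfolding Mod_def by auto
      ultimately have "sat_id (A1 \<times> A2) (prod_ops ops1 ops2) (p, q)" using sat_prod pq by blast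
      then show ?thesis using iso_sat[OF iso alg wf] pq by simp
    qed
    then show "X \<in> Mod ar (Id_of ar C opsC \<inter> Id_of ar D opsD)"
      unfolding XA Mod_def using alg neA by blast
  qed
qed


theorem theorem11p17:
  fixes ar :: "'f \<Rightarrow> nat"
    and C :: "'c set" and opsC :: "'f \<Rightarrow> 'c list \<Rightarrow> 'c"
    and qC :: "nat \<Rightarrow> 'c \<Rightarrow> 'c list \<Rightarrow> 'c" and eC :: "nat \<Rightarrow> 'c"
    and D :: "'d set" and opsD :: "'f \<Rightarrow> 'd list \<Rightarrow> 'd"
    and qD :: "nat \<Rightarrow> 'd \<Rightarrow> 'd list \<Rightarrow> 'd" and eD :: "nat \<Rightarrow> 'd"
  assumes "clone_alg ar C opsC qC eC" and "minimal_clone ar C opsC eC"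
    and "clone_alg ar D opsD qD eD" and "minimal_clone ar D opsD eD"
  shows "(minimal_clone ar (C \<times> D) (prod_ops opsC opsD) (prod_e eC eD)
            \<longleftrightarrow> indep_varieties ar (Id_of ar C opsC) (Id_of ar D opsD))
       \<and> (minimal_clone ar (C \<times> D) (prod_ops opsC opsD) (prod_e eC eD)
            \<longleftrightarrow> Clo ar (C \<times> D) (prod_ops opsC opsD) = repr_ops (C \<times> D) (prod_q qC qD) (prod_e eC eD))
       \<and> (minimal_clone ar (C \<times> D) (prod_ops opsC opsD) (prod_e eC eD) \<longrightarrow>
            (Var_of ar (C \<times> D) (prod_ops opsC opsD) :: ('b set \<times> ('f \<Rightarrow> 'b list \<Rightarrow> 'b)) set)
              = prod_variety ar (Var_of ar C opsC) (Var_of ar D opsD)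
          \<and> (Var_of ar (C \<times> D) (prod_ops opsC opsD) :: ('b set \<times> ('f \<Rightarrow> 'b list \<Rightarrow> 'b)) set)
              = join_variety ar (Id_of ar C opsC) (Id_of ar D opsD))"
proof -
  note CC = assms(1) and minC = assms(2) and CD = assms(3) and minD = assms(4)
  let ?M = "minimal_clone ar (C \<times> D) (prod_ops opsC opsD) (prod_e eC eD)"
  have 1: "?M \<longleftrightarrow> indep_varieties ar (Id_of ar C opsC) (Id_of ar D opsD)"
    using min_indep[OF CC minC CD minD] indep_min[OF CC minC CD minD] by blast
  have 2: "?M \<longleftrightarrow> Clo ar (C \<times> D) (prod_ops opsC opsD) = repr_ops (C \<times> D) (prod_q qC qD) (prod_e eC eD)"
    using min_Clo[OF CC minC CD minD] Clo_min[OF CC minC CD minD] by blast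
  have 3: "(Var_of ar (C \<times> D) (prod_ops opsC opsD) :: ('b set \<times> ('f \<Rightarrow> 'b list \<Rightarrow> 'b)) set)
              = prod_variety ar (Var_of ar C opsC) (Var_of ar D opsD)
          \<and> (Var_of ar (C \<times> D) (prod_ops opsC opsD) :: ('b set \<times> ('f \<Rightarrow> 'b list \<Rightarrow> 'b)) set)
              = join_variety ar (Id_of ar C opsC) (Id_of ar D opsD)" if M: ?M
  proof -
    obtain t where wf: "wf_trm ar t" and tC: "(t, Var 0) \<in> Id_of ar C opsC"
      and tD: "(t, Var 1) \<in> Id_of ar D opsD"
      using M 1 unfolding indep_varieties_def by blast
    have neC: "C \<noteq> {}" using CA_e[OF CC, of 1] by auto
    have neD: "D \<noteq> {}" using CA_e[OF CD, of 1] by auto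
    have eqI: "Id_of ar (C \<times> D) (prod_ops opsC opsD) = Id_of ar C opsC \<inter> Id_of ar D opsD"
      by (rule Id_prod[OF neC neD])
    have "(Var_of ar (C \<times> D) (prod_ops opsC opsD) :: ('b set \<times> ('f \<Rightarrow> 'b list \<Rightarrow> 'b)) set)
        = Mod ar (Id_of ar C opsC \<inter> Id_of ar D opsD)" unfolding eqI ..
    moreover have "(Mod ar (Id_of ar C opsC \<inter> Id_of ar D opsD) :: ('b set \<times> ('f \<Rightarrow> 'b list \<Rightarrow> 'b)) set)
        = prod_variety ar (Var_of ar C opsC) (Var_of ar D opsD)"
      by (rule VAR[OF CA_alg[OF CC] CA_alg[OF CD] neC neD wf tC tD])
    ultimately show ?thesis unfolding join_variety_def by simp
  qed
  show ?thesis using 1 2 3 by blast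
qed

end
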